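(* Let $\lambda>1$, $\mu>1$. Let $\widetilde G$ be the unique rational function for which there exist real $\tilde\beta,\tilde\alpha,\tilde a,\tilde b$ such that: $\widetilde G=P/Q$ with polynomials $\deg P=3$, $\deg Q=2$; $-1$ and $1$ are poles of $\widetilde G$; $\lim_{z\to\infty}\widetilde G(z)/z>0$; $\tilde\beta<-1<\tilde\alpha<\tilde a<1<\tilde b$; $\widetilde G'(\tilde\beta)=\widetilde G'(\tilde\alpha)=\widetilde G'(\tilde a)=\widetilde G'(\tilde b)=0$; $\widetilde G(\tilde\beta)=-\mu$, $\widetilde G(\tilde b)=\lambda$; $-\widetilde G(\tilde\alpha)=\widetilde G(\tilde a)=1$. Let $\widetilde H=c\,\widetilde G$ where $c>0$ is such that $\lim_{z\to\infty}\widetilde H(z)/z=1$. (i) The system $$ \begin{cases} 2\,(a+\alpha)(3-a\alpha-a-\alpha)(3-a\alpha+a+\alpha)+(\lambda-\mu)(a-\alpha)^3=0,\\ (\lambda+\mu)^2(a-\alpha)^6=4\,(3+a\alpha)^3(1-a\alpha)(2+a+\alpha)(2-a-\alpha) \end{cases} $$ has at least one solution $(\alpha,a)$ with $-1<\alpha<a<1$. (ii) Given any such solution, let $\beta<-1$ and $b>1$ be the solutions of $x^2+(a+\alpha)x+\frac{(a-\alpha)^2}{1-a\alpha}-3=0$, put $A=\frac14(1-\beta)(1-\alpha)(1-a)(1-b)$, $B=\frac14(1+\beta)(1+\alpha)(1+a)(1+b)$, $h=\frac14(a+\alpha)\big(2a\alpha-\frac{(a-\alpha)^2}{1-a\alpha}\big)$,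 $H(z)=h+z+\frac{Az}{1-z}+\frac{Bz}{1+z}$ and $G(z)=H(z)/H(a)$. Then $G=\widetilde G$ and $H=\widetilde H$. *)

theory Defs
  imports Complex_Main "HOL-Computational_Algebra.Polynomial"
begin

definition ratfun :: "real poly \<Rightarrow> real poly \<Rightarrow> real \<Rightarrow> real" where
  "ratfun P Q = (\<lambda>z. poly P z / poly Q z)"

definition is_real_pole :: "(real \<Rightarrow> real) \<Rightarrow> real \<Rightarrow> bool" where
  "is_real_pole f x \<longleftrightarrow> filterlim (\<lambda>z. \<bar>f z\<bar>) at_top (at x)"

definition isGtilde :: "real \<Rightarrow> real \<Rightarrow> real poly \<Rightarrow> real poly \<Rightarrow> bool" where
  "isGtilde lam mu P Q \<longleftrightarrow>
     degree P = 3 \<and> degree Q = 2 \<and>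
     is_real_pole (ratfun P Q) (-1) \<and> is_real_pole (ratfun P Q) 1 \<and>
     (\<exists>L>0. ((\<lambda>z. ratfun P Q z / z) \<longlongrightarrow> L) at_top) \<and>
     (\<exists>bt at' ta tb. bt < -1 \<and> -1 < at' \<and> at' < ta \<and> ta < 1 \<and> 1 < tb \<and>
        (ratfun P Q has_real_derivative 0) (at bt) \<and>
        (ratfun P Q has_real_derivative 0) (at at') \<and>
        (ratfun P Q has_real_derivative 0) (at ta) \<and>
        (ratfun P Q has_real_derivative 0) (at tb) \<and>
        ratfun P Q bt = - mu \<and> ratfun P Q tb = lam \<and>
        - ratfun P Q at' = 1 \<and> ratfun P Q ta = 1)"

definition sys :: "real \<Rightarrow> real \<Rightarrow> real \<Rightarrow> real \<Rightarrow> bool" where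
  "sys lam mu \<alpha> a \<longleftrightarrow>
     2 * (a + \<alpha>) * (3 - a*\<alpha> - a - \<alpha>) * (3 - a*\<alpha> + a + \<alpha>) + (lam - mu) * (a - \<alpha>)^3 = 0 \<and>
     (lam + mu)^2 * (a - \<alpha>)^6 =
       4 * (3 + a*\<alpha>)^3 * (1 - a*\<alpha>) * (2 + a + \<alpha>) * (2 - a - \<alpha>)"

definition quad :: "real \<Rightarrow> real \<Rightarrow> real \<Rightarrow> real" where
  "quad \<alpha> a x = x^2 + (a + \<alpha>) * x + (a - \<alpha>)^2 / (1 - a*\<alpha>) - 3"

definition coefA :: "real \<Rightarrow> real \<Rightarrow> real \<Rightarrow> real \<Rightarrow> real" where
  "coefA \<beta> \<alpha> a b = (1/4) * (1 - \<beta>) * (1 - \<alpha>) * (1 - a) * (1 - b)"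

definition coefB :: "real \<Rightarrow> real \<Rightarrow> real \<Rightarrow> real \<Rightarrow> real" where
  "coefB \<beta> \<alpha> a b = (1/4) * (1 + \<beta>) * (1 + \<alpha>) * (1 + a) * (1 + b)"

definition coefh :: "real \<Rightarrow> real \<Rightarrow> real" where
  "coefh \<alpha> a = (1/4) * (a + \<alpha>) * (2*a*\<alpha> - (a - \<alpha>)^2 / (1 - a*\<alpha>))"

definition Hfun :: "real \<Rightarrow> real \<Rightarrow> real \<Rightarrow> real \<Rightarrow> real \<Rightarrow> real" where
  "Hfun \<beta> \<alpha> a b z = coefh \<alpha> a + z + coefA \<beta> \<alpha> a b * z / (1 - z) + coefB \<beta> \<alpha> a b * z / (1 + z)"

definition Gfun :: "real \<Rightarrow> real \<Rightarrow> real \<Rightarrow> real \<Rightarrow> real \<Rightarrow> real" where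
  "Gfun \<beta> \<alpha> a b z = Hfun \<beta> \<alpha> a b z / Hfun \<beta> \<alpha> a b a"

end

theory Submission
  imports Defs
begin

definition Rf :: "real \<Rightarrow> real \<Rightarrow> real" where "Rf x y = (3 + x*y)^3 * (1 - x*y) * (4 - (x+y)^2)"
definition SXf :: "real \<Rightarrow> real \<Rightarrow> real" where "SXf x y = (x+y) * ((3 - x*y)^2 - (x+y)^2)"
definition Ry :: "real \<Rightarrow> real \<Rightarrow> real" where "Ry x y = - 54*y - 54*x - 144*x^2*y + 72*x^2*y^3 + 12*x^3*y^2 + 40*x^3*y^4 + 36*x^4*y + 48*x^4*y^3 + 6*x^4*y^5 + 24*x^5*y^2 + 10*x^5*y^4 + 4*x^6*y^3"

definition Rx :: "real \<Rightarrow> real \<Rightarrow> real" where "Rx x y = - 54*y - 54*x - 144*x*y^2 + 36*x*y^4 + 12*x^2*y^3 + 24*x^2*y^5 + 72*x^3*y^2 + 48*x^3*y^4 + 4*x^3*y^6 + 40*x^4*y^3 + 10*x^4*y^5 + 6*x^5*y^4"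

definition SXy :: "real \<Rightarrow> real \<Rightarrow> real" where "SXy x y = 9 - 3*y^2 - 18*x*y - 9*x^2 + 3*x^2*y^2 + 2*x^3*y"

definition SXx :: "real \<Rightarrow> real \<Rightarrow> real" where "SXx x y = 9 - 9*y^2 - 18*x*y + 2*x*y^3 - 3*x^2 + 3*x^2*y^2"

definition HP1 :: "real \<Rightarrow> real \<Rightarrow> real \<Rightarrow> real" where "HP1 w v u = 8192*v^2*u^8 + 45056*v^3*u^7 + 108544*v^4*u^6 + 150528*v^5*u^5 + 132096*v^6*u^4 + 75264*v^7*u^3 + 27136*v^8*u^2 + 5632*v^9*u + 512*v^10 + 28672*w*v*u^8 + 176128*w*v^2*u^7 + 490496*w*v^3*u^6 + 798720*w*v^4*u^5 + 823296*w*v^5*u^4 + 546816*w*v^6*u^3 + 227840*w*v^7*u^2 + 54272*w*v^8*u + 5632*w*v^9 + 24576*w^2*u^8 + 210944*w^2*v*u^7 + 796672*w^2*v^2*u^6 + 1666560*w^2*v^3*u^5 + 2115072*w^2*v^4*u^4 + 1680384*w^2*v^5*u^3 + 820224*w^2*v^6*u^2 + 225280*w^2*v^7*u + 26624*w^2*v^8 + 73728*w^3*u^7 + 559104*w^3*v*u^6 + 1716224*w^3*v^2*u^5 + 2869760*w^3*v^3*u^4 + 2836480*w^3*v^4*u^3 + 1655808*w^3*v^5*u^2 + 528384*w^3*v^6*u + 70656*w^3*v^7 + 147456*w^4*u^6 + 870400*w^4*v*u^5 + 2172928*w^4*v^2*u^4 + 2842112*w^4*v^3*u^3 + 2050560*w^4*v^4*u^2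 + 769536*w^4*v^5*u + 115200*w^4*v^6 + 172032*w^5*u^5 + 874496*w^5*v*u^4 + 1687552*w^5*v^2*u^3 + 1595904*w^5*v^3*u^2 + 715776*w^5*v^4*u + 118272*w^5*v^5 + 147456*w^6*u^4 + 546816*w^6*v*u^3 + 763904*w^6*v^2*u^2 + 416768*w^6*v^3*u + 74752*w^6*v^4 + 73728*w^7*u^3 + 206848*w^7*v*u^2 + 139264*w^7*v^2*u + 26624*w^7*v^3 + 24576*w^8*u^2 + 20480*w^8*v*u + 4096*w^8*v^2"

definition HP2 :: "real \<Rightarrow> real \<Rightarrow> real \<Rightarrow> real" where "HP2 w v u = 134217728*v^6*u^12 + 1073741824*v^7*u^11 + 3858759680*v^8*u^10 + 8220835840*v^9*u^9 + 11534336000*v^10*u^8 + 11190403072*v^11*u^7 + 7660896256*v^12*u^6 + 3701473280*v^13*u^5 + 1237319680*v^14*u^4 + 272629760*v^15*u^3 + 35651584*v^16*u^2 + 2097152*v^17*u + 1543503872*w*v^5*u^12 + 12381585408*w*v^6*u^11 + 44962938880*w*v^7*u^10 + 97559511040*w*v^8*u^9 + 140488212480*w*v^9*u^8 + 140905545728*w*v^10*u^7 + 100371791872*w*v^11*u^6 + 50740592640*w*v^12*u^5 + 17825792000*w*v^13*u^4 + 4141875200*w*v^14*u^3 + 572522496*w*v^15*u^2 + 35651584*w*v^16*u + 7147094016*w^2*v^4*u^12 + 58518929408*w^2*v^5*u^11 + 219060109312*w^2*v^6*u^10 + 494005125120*w^2*v^7*u^9 + 744063238144*w^2*v^8*u^8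 + 784112549888*w^2*v^9*u^7 + 588622331904*w^2*v^10*u^6 + 314130300928*w^2*v^11*u^5 + 116595359744*w^2*v^12*u^4 + 28626124800*w^2*v^13*u^3 + 4179623936*w^2*v^14*u^2 + 274726912*w^2*v^15*u + 17062428672*w^3*v^3*u^12 + 146641256448*w^3*v^4*u^11 + 582811123712*w^3*v^5*u^10 + 1403831451648*w^3*v^6*u^9 + 2263131095040*w^3*v^7*u^8 + 2551585964032*w^3*v^8*u^7 + 2045551575040*w^3*v^9*u^6 + 1162833035264*w^3*v^10*u^5 + 458397581312*w^3*v^11*u^4 + 119149690880*w^3*v^12*u^3 + 18356371456*w^3*v^13*u^2 + 1268776960*w^3*v^14*u + 22196256768*w^4*v^2*u^12 + 209958469632*w^4*v^3*u^11 + 927146704896*w^4*v^4*u^10 + 2475291574272*w^4*v^5*u^9 + 4391914438656*w^4*v^6*u^8 + 5406134894592*w^4*v^7*u^7 + 4694871113728*w^4*v^8*u^6 + 2869935734784*w^4*v^9*u^5 + 1208100061184*w^4*v^10*u^4 + 333059194880*w^4*v^11*u^3 + 54062481408*w^4*v^12*u^2 + 3911188480*w^4*v^13*u + 14948499456*w^5*v*u^12 + 171001774080*w^5*v^2*u^11 + 904950448128*w^5*v^3*u^10 + 2819056730112*w^5*v^4*u^9 + 5698410774528*w^5*v^5*u^8 + 7841664466944*w^5*v^6*u^7 + 7497546989568*w^5*v^7*u^6 + 4980478050304*w^5*v^8*u^5 + 2251840028672*w^5*v^9*u^4 + 659596247040*w^5*v^10*u^3 + 112581410816*w^5*v^11*u^2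 + 8478785536*w^5*v^12*u + 4076863488*w^6*u^12 + 72704065536*w^6*v*u^11 + 531464454144*w^6*v^2*u^10 + 2081635172352*w^6*v^3*u^9 + 5016448401408*w^6*v^4*u^8 + 7950991097856*w^6*v^5*u^7 + 8535807098880*w^6*v^6*u^6 + 6237928292352*w^6*v^7*u^5 + 3049001058304*w^6*v^8*u^4 + 950366371840*w^6*v^9*u^3 + 170110484480*w^6*v^10*u^2 + 13256097792*w^6*v^11*u + 12230590464*w^7*u^11 + 173266698240*w^7*v*u^10 + 963611983872*w^7*v^2*u^9 + 2962011193344*w^7*v^3*u^8 + 5634565079040*w^7*v^4*u^7 + 6967573610496*w^7*v^5*u^6 + 5687507681280*w^7*v^6*u^5 + 3027555581952*w^7*v^7*u^4 + 1005322240000*w^7*v^8*u^3 + 188045328384*w^7*v^9*u^2 + 15063842816*w^7*v^10*u + 24461180928*w^8*u^10 + 253445013504*w^8*v*u^9 + 1123628875776*w^8*v^2*u^8 + 2731894898688*w^8*v^3*u^7 + 4033697808384*w^8*v^4*u^6 + 3751872036864*w^8*v^5*u^5 + 2193308516352*w^8*v^6*u^4 + 776082554880*w^8*v^7*u^3 + 151011721216*w^8*v^8*u^2 + 12352225280*w^8*v^9*u + 28538044416*w^9*u^9 + 248009195520*w^9*v*u^8 + 860331442176*w^9*v^2*u^7 + 1606454083584*w^9*v^3*u^6 + 1750465511424*w^9*v^4*u^5 + 1133902823424*w^9*v^5*u^4 + 427011604480*w^9*v^6*u^3 + 85949677568*w^9*v^7*u^2 + 7130316800*w^9*v^8*u +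 24461180928*w^10*u^8 + 156959244288*w^10*v*u^7 + 414594367488*w^10*v^2*u^6 + 550716309504*w^10*v^3*u^5 + 398513405952*w^10*v^4*u^4 + 159152865280*w^10*v^5*u^3 + 32916897792*w^10*v^6*u^2 + 2751463424*w^10*v^7*u + 12230590464*w^11*u^7 + 61832429568*w^11*v*u^6 + 105771958272*w^11*v^2*u^5 + 85840625664*w^11*v^3*u^4 + 36112957440*w^11*v^4*u^3 + 7616856064*w^11*v^5*u^2 + 637534208*w^11*v^6*u + 4076863488*w^12*u^6 + 9512681472*w^12*v*u^5 + 8606711808*w^12*v^2*u^4 + 3774873600*w^12*v^3*u^3 + 805306368*w^12*v^4*u^2 + 67108864*w^12*v^5*u"

definition HP3 :: "real \<Rightarrow> real \<Rightarrow> real \<Rightarrow> real" where "HP3 w v u = 4096*v^2*u^8 + 26624*v^3*u^7 + 74752*v^4*u^6 + 118272*v^5*u^5 + 115200*v^6*u^4 + 70656*v^7*u^3 + 26624*v^8*u^2 + 5632*v^9*u + 512*v^10 + 20480*w*v*u^8 + 139264*w*v^2*u^7 + 416768*w*v^3*u^6 + 715776*w*v^4*u^5 + 769536*w*v^5*u^4 + 528384*w*v^6*u^3 + 225280*w*v^7*u^2 + 54272*w*v^8*u + 5632*w*v^9 + 24576*w^2*u^8 + 206848*w^2*v*u^7 + 763904*w^2*v^2*u^6 + 1595904*w^2*v^3*u^5 + 2050560*w^2*v^4*u^4 + 1655808*w^2*v^5*u^3 + 820224*w^2*v^6*u^2 + 227840*w^2*v^7*u + 27136*w^2*v^8 + 73728*w^3*u^7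 + 546816*w^3*v*u^6 + 1687552*w^3*v^2*u^5 + 2842112*w^3*v^3*u^4 + 2836480*w^3*v^4*u^3 + 1680384*w^3*v^5*u^2 + 546816*w^3*v^6*u + 75264*w^3*v^7 + 147456*w^4*u^6 + 874496*w^4*v*u^5 + 2172928*w^4*v^2*u^4 + 2869760*w^4*v^3*u^3 + 2115072*w^4*v^4*u^2 + 823296*w^4*v^5*u + 132096*w^4*v^6 + 172032*w^5*u^5 + 870400*w^5*v*u^4 + 1716224*w^5*v^2*u^3 + 1666560*w^5*v^3*u^2 + 798720*w^5*v^4*u + 150528*w^5*v^5 + 147456*w^6*u^4 + 559104*w^6*v*u^3 + 796672*w^6*v^2*u^2 + 490496*w^6*v^3*u + 108544*w^6*v^4 + 73728*w^7*u^3 + 210944*w^7*v*u^2 + 176128*w^7*v^2*u + 45056*w^7*v^3 + 24576*w^8*u^2 + 28672*w^8*v*u + 8192*w^8*v^2"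

definition HP4 :: "real \<Rightarrow> real \<Rightarrow> real \<Rightarrow> real" where "HP4 w v u = 67108864*w*v^5*u^12 + 637534208*w*v^6*u^11 + 2751463424*w*v^7*u^10 + 7130316800*w*v^8*u^9 + 12352225280*w*v^9*u^8 + 15063842816*w*v^10*u^7 + 13256097792*w*v^11*u^6 + 8478785536*w*v^12*u^5 + 3911188480*w*v^13*u^4 + 1268776960*w*v^14*u^3 + 274726912*w*v^15*u^2 + 35651584*w*v^16*u + 2097152*w*v^17 + 805306368*w^2*v^4*u^12 + 7616856064*w^2*v^5*u^11 + 32916897792*w^2*v^6*u^10 + 85949677568*w^2*v^7*u^9 + 151011721216*w^2*v^8*u^8 + 188045328384*w^2*v^9*u^7 + 170110484480*w^2*v^10*u^6 + 112581410816*w^2*v^11*u^5 + 54062481408*w^2*v^12*u^4 + 18356371456*w^2*v^13*u^3 + 4179623936*w^2*v^14*u^2 + 572522496*w^2*v^15*u + 35651584*w^2*v^16 + 3774873600*w^3*v^3*u^12 + 36112957440*w^3*v^4*u^11 + 159152865280*w^3*v^5*u^10 + 427011604480*w^3*v^6*u^9 + 776082554880*w^3*v^7*u^8 + 1005322240000*w^3*v^8*u^7 + 950366371840*w^3*v^9*u^6 + 659596247040*w^3*v^10*u^5 + 333059194880*w^3*v^11*u^4 + 119149690880*w^3*v^12*u^3 + 28626124800*w^3*v^13*u^2 + 4141875200*w^3*v^14*u + 272629760*w^3*v^15 + 8606711808*w^4*v^2*u^12 + 85840625664*w^4*v^3*u^11 + 398513405952*w^4*v^4*u^10 + 1133902823424*w^4*v^5*u^9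 + 2193308516352*w^4*v^6*u^8 + 3027555581952*w^4*v^7*u^7 + 3049001058304*w^4*v^8*u^6 + 2251840028672*w^4*v^9*u^5 + 1208100061184*w^4*v^10*u^4 + 458397581312*w^4*v^11*u^3 + 116595359744*w^4*v^12*u^2 + 17825792000*w^4*v^13*u + 1237319680*w^4*v^14 + 9512681472*w^5*v*u^12 + 105771958272*w^5*v^2*u^11 + 550716309504*w^5*v^3*u^10 + 1750465511424*w^5*v^4*u^9 + 3751872036864*w^5*v^5*u^8 + 5687507681280*w^5*v^6*u^7 + 6237928292352*w^5*v^7*u^6 + 4980478050304*w^5*v^8*u^5 + 2869935734784*w^5*v^9*u^4 + 1162833035264*w^5*v^10*u^3 + 314130300928*w^5*v^11*u^2 + 50740592640*w^5*v^12*u + 3701473280*w^5*v^13 + 4076863488*w^6*u^12 + 61832429568*w^6*v*u^11 + 414594367488*w^6*v^2*u^10 + 1606454083584*w^6*v^3*u^9 + 4033697808384*w^6*v^4*u^8 + 6967573610496*w^6*v^5*u^7 + 8535807098880*w^6*v^6*u^6 + 7497546989568*w^6*v^7*u^5 + 4694871113728*w^6*v^8*u^4 + 2045551575040*w^6*v^9*u^3 + 588622331904*w^6*v^10*u^2 + 100371791872*w^6*v^11*u + 7660896256*w^6*v^12 + 12230590464*w^7*u^11 + 156959244288*w^7*v*u^10 + 860331442176*w^7*v^2*u^9 + 2731894898688*w^7*v^3*u^8 + 5634565079040*w^7*v^4*u^7 + 7950991097856*w^7*v^5*u^6 + 7841664466944*w^7*v^6*u^5 + 5406134894592*w^7*v^7*u^4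 + 2551585964032*w^7*v^8*u^3 + 784112549888*w^7*v^9*u^2 + 140905545728*w^7*v^10*u + 11190403072*w^7*v^11 + 24461180928*w^8*u^10 + 248009195520*w^8*v*u^9 + 1123628875776*w^8*v^2*u^8 + 2962011193344*w^8*v^3*u^7 + 5016448401408*w^8*v^4*u^6 + 5698410774528*w^8*v^5*u^5 + 4391914438656*w^8*v^6*u^4 + 2263131095040*w^8*v^7*u^3 + 744063238144*w^8*v^8*u^2 + 140488212480*w^8*v^9*u + 11534336000*w^8*v^10 + 28538044416*w^9*u^9 + 253445013504*w^9*v*u^8 + 963611983872*w^9*v^2*u^7 + 2081635172352*w^9*v^3*u^6 + 2819056730112*w^9*v^4*u^5 + 2475291574272*w^9*v^5*u^4 + 1403831451648*w^9*v^6*u^3 + 494005125120*w^9*v^7*u^2 + 97559511040*w^9*v^8*u + 8220835840*w^9*v^9 + 24461180928*w^10*u^8 + 173266698240*w^10*v*u^7 + 531464454144*w^10*v^2*u^6 + 904950448128*w^10*v^3*u^5 + 927146704896*w^10*v^4*u^4 + 582811123712*w^10*v^5*u^3 + 219060109312*w^10*v^6*u^2 + 44962938880*w^10*v^7*u + 3858759680*w^10*v^8 + 12230590464*w^11*u^7 + 72704065536*w^11*v*u^6 + 171001774080*w^11*v^2*u^5 + 209958469632*w^11*v^3*u^4 + 146641256448*w^11*v^4*u^3 + 58518929408*w^11*v^5*u^2 + 12381585408*w^11*v^6*u + 1073741824*w^11*v^7 + 4076863488*w^12*u^6 + 14948499456*w^12*v*u^5 + 22196256768*w^12*v^2*u^4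 + 17062428672*w^12*v^3*u^3 + 7147094016*w^12*v^4*u^2 + 1543503872*w^12*v^5*u + 134217728*w^12*v^6"

definition HP5 :: "real \<Rightarrow> real \<Rightarrow> real \<Rightarrow> real" where "HP5 w v u = 16384*v^4*u^8 + 106496*v^5*u^7 + 299008*v^6*u^6 + 473088*v^7*u^5 + 460800*v^8*u^4 + 282624*v^9*u^3 + 106496*v^10*u^2 + 22528*v^11*u + 2048*v^12 + 212992*w*v^3*u^8 + 1343488*w*v^4*u^7 + 3698688*w*v^5*u^6 + 5812224*w*v^6*u^5 + 5707776*w*v^7*u^4 + 3588096*w*v^8*u^3 + 1409024*w*v^9*u^2 + 315392*w*v^10*u + 30720*w*v^11 + 884736*w^2*v^2*u^8 + 5611520*w^2*v^3*u^7 + 15802368*w^2*v^4*u^6 + 25798656*w^2*v^5*u^5 + 26658816*w^2*v^6*u^4 + 17805312*w^2*v^7*u^3 + 7483392*w^2*v^8*u^2 + 1804288*w^2*v^9*u + 190464*w^2*v^10 + 1474560*w^3*v*u^8 + 10027008*w^3*v^2*u^7 + 30965760*w^3*v^3*u^6 + 55902208*w^3*v^4*u^5 + 63789056*w^3*v^5*u^4 + 46784512*w^3*v^6*u^3 + 21467136*w^3*v^7*u^2 + 5627904*w^3*v^8*u + 645120*w^3*v^9 + 884736*w^4*u^8 + 7667712*w^4*v*u^7 + 30007296*w^4*v^2*u^6 + 65781760*w^4*v^3*u^5 + 87580672*w^4*v^4*u^4 + 72787968*w^4*v^5*u^3 + 37066752*w^4*v^6*u^2 + 10616832*w^4*v^7*u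 + 1314816*w^4*v^8 + 1769472*w^5*u^7 + 13860864*w^5*v*u^6 + 42909696*w^5*v^2*u^5 + 71352320*w^5*v^3*u^4 + 69697536*w^5*v^4*u^3 + 40040448*w^5*v^5*u^2 + 12533760*w^5*v^6*u + 1658880*w^5*v^7 + 2654208*w^6*u^6 + 14450688*w^6*v*u^5 + 33546240*w^6*v^2*u^4 + 40697856*w^6*v^3*u^3 + 26804224*w^6*v^4*u^2 + 9113600*w^6*v^5*u + 1269760*w^6*v^6 + 1769472*w^7*u^5 + 8257536*w^7*v*u^4 + 13565952*w^7*v^2*u^3 + 10313728*w^7*v^3*u^2 + 3751936*w^7*v^4*u + 540672*w^7*v^5 + 884736*w^8*u^4 + 2064384*w^8*v*u^3 + 1769472*w^8*v^2*u^2 + 671744*w^8*v^3*u + 98304*w^8*v^4"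

lemma bary_pos_aux: "0 < (1::real) - y \<Longrightarrow> 0 < y - x \<Longrightarrow> 0 < 1 + x \<Longrightarrow> True" by simp

lemma HP1_pos: "0 < w \<Longrightarrow> 0 < v \<Longrightarrow> 0 < u \<Longrightarrow> 0 < HP1 w v u"
  unfolding HP1_def by (intro add_pos_pos mult_pos_pos zero_less_power; simp)
lemma HP2_pos: "0 < w \<Longrightarrow> 0 < v \<Longrightarrow> 0 < u \<Longrightarrow> 0 < HP2 w v u"
  unfolding HP2_def by (intro add_pos_pos mult_pos_pos zero_less_power; simp)
lemma HP3_pos: "0 < w \<Longrightarrow> 0 < v \<Longrightarrow> 0 < u \<Longrightarrow> 0 < HP3 w v u"
  unfolding HP3_def by (intro add_pos_pos mult_pos_pos zero_less_power; simp)
lemma HP4_pos: "0 < w \<Longrightarrow> 0 < v \<Longrightarrow> 0 < u \<Longrightarrow> 0 < HP4 w v u"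
  unfolding HP4_def by (intro add_pos_pos mult_pos_pos zero_less_power; simp)
lemma HP5_pos: "0 < w \<Longrightarrow> 0 < v \<Longrightarrow> 0 < u \<Longrightarrow> 0 < HP5 w v u"
  unfolding HP5_def by (intro add_pos_pos mult_pos_pos zero_less_power; simp)

lemma HP1_id: "Ry x y * (y - x) - 6 * Rf x y = - HP1 (1 - y) (y - x) (1 + x) / 2^10"
  unfolding Ry_def Rf_def HP1_def by algebra
lemma HP2_id: "(Ry x y * (y - x) - 6 * Rf x y)^2 - (6*SXf x y - 2*(y-x)*SXy x y)^2 * Rf x y = HP2 (1 - y) (y - x) (1 + x) / 2^18"
  unfolding Ry_def Rf_def HP2_def SXf_def SXy_def by algebra
lemma HP3_id: "Rx x y * (y - x) + 6 * Rf x y = HP3 (1 - y) (y - x) (1 + x) / 2^10"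
  unfolding Rx_def Rf_def HP3_def by algebra
lemma HP4_id: "(Rx x y * (y - x) + 6 * Rf x y)^2 - (2*(y-x)*SXx x y + 6*SXf x y)^2 * Rf x y = HP4 (1 - y) (y - x) (1 + x) / 2^18"
  unfolding Rx_def Rf_def HP4_def SXf_def SXx_def by algebra
lemma HP5_id: "2 * Rf x y * SXx x y - SXf x y * Rx x y = HP5 (1 - y) (y - x) (1 + x) / 2^12"
  unfolding Rx_def Rf_def HP5_def SXf_def SXx_def by algebra

lemma dR_y: "((\<lambda>y. Rf x y) has_real_derivative Ry x y) (at y)"
  unfolding Rf_def Ry_def by (rule derivative_eq_intros refl | simp)+ algebra
lemma dR_x: "((\<lambda>x. Rf x y) has_real_derivative Rx x y) (at x)"
  unfolding Rf_def Rx_def by (rule derivative_eq_intros refl | simp)+ algebra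
lemma dSX_y: "((\<lambda>y. SXf x y) has_real_derivative SXy x y) (at y)"
  unfolding SXf_def SXy_def by (rule derivative_eq_intros refl | simp)+ algebra
lemma dSX_x: "((\<lambda>x. SXf x y) has_real_derivative SXx x y) (at x)"
  unfolding SXf_def SXx_def by (rule derivative_eq_intros refl | simp)+ algebra

definition Wf :: "real \<Rightarrow> real \<Rightarrow> real" where "Wf x y = sqrt (Rf x y)"
definition Lf :: "real \<Rightarrow> real \<Rightarrow> real" where "Lf x y = (Wf x y - SXf x y) / (y - x)^3"
definition Mf :: "real \<Rightarrow> real \<Rightarrow> real" where "Mf x y = (Wf x y + SXf x y) / (y - x)^3"
definition Tf :: "real \<Rightarrow> real \<Rightarrow> real" where "Tf x y = SXf x y / Wf x y"

lemma Rf_pos: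
  assumes "-1 \<le> x" "x < y" "y \<le> 1" shows "0 < Rf x y"
proof -
  have a: "0 < 3 + x*y"
  proof -
    have "-1 \<le> x*y"
    proof (cases "0 \<le> x*y")
      case False
      have "\<bar>x\<bar> \<le> 1" "\<bar>y\<bar> \<le> 1" using assms by auto
      hence "\<bar>x*y\<bar> \<le> 1" by (simp add: abs_mult mult_le_one)
      thus ?thesis by linarith
    qed auto
    thus ?thesis by linarith
  qed
  have b: "0 < 1 - x*y"
  proof -
    have "0 < (1-x)*(1+y)" using assms by (intro mult_pos_pos) auto
    moreover have "0 \<le> (1+x)*(1-y)" using assms by (intro mult_nonneg_nonneg) auto
    ultimately have "0 < (1-x)*(1+y) + (1+x)*(1-y)" by linarith
    moreover have "(1-x)*(1+y) + (1+x)*(1-y) = 2 - 2*(x*y)" by algebra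
    ultimately show ?thesis by linarith
  qed
  have c: "0 < 4 - (x+y)^2"
  proof -
    have "x + y < 2" "-2 < x + y" using assms by auto
    hence "0 < (2 - (x+y)) * (2 + (x+y))" by (intro mult_pos_pos) auto
    moreover have "(2 - (x+y)) * (2 + (x+y)) = 4 - (x+y)^2" by algebra
    ultimately show ?thesis by linarith
  qed
  have d: "0 < (3 + x*y)^3" using a by (rule zero_less_power)
  have "0 < (3 + x*y)^3 * (1 - x*y) * (4 - (x+y)^2)"
    by (rule mult_pos_pos[OF mult_pos_pos[OF d b] c])
  thus ?thesis by (simp only: Rf_def)
qed

lemma Rf_sym: "Rf (-y) (-x) = Rf x y" unfolding Rf_def by algebra
lemma SXf_sym: "SXf (-y) (-x) = - SXf x y" unfolding SXf_def by algebra
lemma Wf_sym: "Wf (-y) (-x) = Wf x y" unfolding Wf_def by (simp add: Rf_sym)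
lemma Mf_sym: "Mf x y = Lf (-y) (-x)" unfolding Mf_def Lf_def by (simp add: Wf_sym SXf_sym)
lemma Tf_sym: "Tf (-y) (-x) = - Tf x y" unfolding Tf_def by (simp add: Wf_sym SXf_sym)

lemma sign_aux:
  fixes A B R :: real
  assumes "A < 0" "B^2 * R < A^2" "0 \<le> R"
  shows "A + B * sqrt R < 0"
proof -
  have "(B * sqrt R)^2 = B^2 * R" using assms by (simp add: power_mult_distrib)
  hence "(B * sqrt R)^2 < A^2" using assms by simp
  hence "\<bar>B * sqrt R\<bar> < \<bar>A\<bar>" by (meson abs_le_square_iff not_le)
  thus ?thesis using assms by linarith
qed

lemma Wf_pos: "-1 \<le> x \<Longrightarrow> x < y \<Longrightarrow> y \<le> 1 \<Longrightarrow> 0 < Wf x y"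
  unfolding Wf_def using Rf_pos by simp
lemma Wf_sq: "-1 \<le> x \<Longrightarrow> x < y \<Longrightarrow> y \<le> 1 \<Longrightarrow> Wf x y * Wf x y = Rf x y"
  unfolding Wf_def using Rf_pos[of x y] by (simp add: abs_of_pos)

lemma dW_y:
  assumes "-1 \<le> x" "x < y" "y \<le> 1"
  shows "((\<lambda>y. Wf x y) has_real_derivative Ry x y / (2 * Wf x y)) (at y)"
proof -
  have R: "0 < Rf x y" using Rf_pos assms by blast
  have "((\<lambda>y. sqrt (Rf x y)) has_real_derivative inverse (sqrt (Rf x y)) / 2 * Ry x y) (at y)"
    by (rule DERIV_chain2[OF DERIV_real_sqrt[OF R] dR_y])
  moreover have "inverse (sqrt (Rf x y)) / 2 * Ry x y = Ry x y / (2 * Wf x y)"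
    unfolding Wf_def by (simp add: field_simps)
  ultimately show ?thesis unfolding Wf_def by (rule DERIV_cong)
qed

lemma dW_x:
  assumes "-1 \<le> x" "x < y" "y \<le> 1"
  shows "((\<lambda>x. Wf x y) has_real_derivative Rx x y / (2 * Wf x y)) (at x)"
proof -
  have R: "0 < Rf x y" using Rf_pos assms by blast
  have "((\<lambda>x. sqrt (Rf x y)) has_real_derivative inverse (sqrt (Rf x y)) / 2 * Rx x y) (at x)"
    by (rule DERIV_chain2[OF DERIV_real_sqrt[OF R] dR_x])
  moreover have "inverse (sqrt (Rf x y)) / 2 * Rx x y = Rx x y / (2 * Wf x y)"
    unfolding Wf_def by (simp add: field_simps)
  ultimately show ?thesis unfolding Wf_def by (rule DERIV_cong)
qed

lemma dL_y:
  assumes "-1 \<le> x" "x < y" "y \<le> 1"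
  shows "((\<lambda>y. Lf x y) has_real_derivative
     ((Ry x y*(y-x) - 6*Rf x y) + (6*SXf x y - 2*(y-x)*SXy x y) * Wf x y) / (2 * Wf x y * (y-x)^4)) (at y)"
proof -
  have W: "0 < Wf x y" and W2: "Wf x y * Wf x y = Rf x y" using Wf_pos Wf_sq assms by auto
  have d: "y - x \<noteq> 0" using assms by simp
  have dD: "((\<lambda>y. (y-x)^3) has_real_derivative 3*(y-x)^2) (at y)"
    by (rule derivative_eq_intros refl | simp)+
  have "((\<lambda>y. (Wf x y - SXf x y) / (y-x)^3) has_real_derivative
     ((Ry x y / (2 * Wf x y) - SXy x y) * (y-x)^3 - (Wf x y - SXf x y) * (3*(y-x)^2)) / ((y-x)^3 * (y-x)^3)) (at y)"
    using d by (intro DERIV_divide DERIV_diff dW_y dSX_y dD assms) simp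
  moreover have "((Ry x y / (2 * Wf x y) - SXy x y) * (y-x)^3 - (Wf x y - SXf x y) * (3*(y-x)^2)) / ((y-x)^3 * (y-x)^3)
     = ((Ry x y*(y-x) - 2*Wf x y*SXy x y*(y-x)) - 6*Wf x y*(Wf x y - SXf x y)) / (2 * Wf x y * (y-x)^4)"
    using W d by (simp add: field_simps) (simp add: algebra_simps power_def)?
  moreover have "(Ry x y*(y-x) - 2*Wf x y*SXy x y*(y-x)) - 6*Wf x y*(Wf x y - SXf x y)
     = (Ry x y*(y-x) - 6*Rf x y) + (6*SXf x y - 2*(y-x)*SXy x y) * Wf x y"
    unfolding W2[symmetric] by (simp add: algebra_simps)
  ultimately show ?thesis unfolding Lf_def by (metis (no_types, lifting) DERIV_cong)
qed

lemma dL_x: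
  assumes "-1 \<le> x" "x < y" "y \<le> 1"
  shows "((\<lambda>x. Lf x y) has_real_derivative
     ((Rx x y*(y-x) + 6*Rf x y) - (2*(y-x)*SXx x y + 6*SXf x y) * Wf x y) / (2 * Wf x y * (y-x)^4)) (at x)"
proof -
  have W: "0 < Wf x y" and W2: "Wf x y * Wf x y = Rf x y" using Wf_pos Wf_sq assms by auto
  have d: "y - x \<noteq> 0" using assms by simp
  have dD: "((\<lambda>x. (y-x)^3) has_real_derivative - (3*(y-x)^2)) (at x)"
    by (rule derivative_eq_intros refl | simp)+
  have "((\<lambda>x. (Wf x y - SXf x y) / (y-x)^3) has_real_derivative
     ((Rx x y / (2 * Wf x y) - SXx x y) * (y-x)^3 - (Wf x y - SXf x y) * (- (3*(y-x)^2))) / ((y-x)^3 * (y-x)^3)) (at x)"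
    using d by (intro DERIV_divide DERIV_diff dW_x dSX_x dD assms) simp
  moreover have "((Rx x y / (2 * Wf x y) - SXx x y) * (y-x)^3 - (Wf x y - SXf x y) * (- (3*(y-x)^2))) / ((y-x)^3 * (y-x)^3)
     = ((Rx x y*(y-x) - 2*Wf x y*SXx x y*(y-x)) + 6*Wf x y*(Wf x y - SXf x y)) / (2 * Wf x y * (y-x)^4)"
    using W d by (simp add: field_simps) (simp add: algebra_simps power_def)?
  moreover have "(Rx x y*(y-x) - 2*Wf x y*SXx x y*(y-x)) + 6*Wf x y*(Wf x y - SXf x y)
     = (Rx x y*(y-x) + 6*Rf x y) - (2*(y-x)*SXx x y + 6*SXf x y) * Wf x y"
    unfolding W2[symmetric] by (simp add: algebra_simps)
  ultimately show ?thesis unfolding Lf_def by (metis (no_types, lifting) DERIV_cong)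
qed

lemma dT_x:
  assumes "-1 \<le> x" "x < y" "y \<le> 1"
  shows "((\<lambda>x. Tf x y) has_real_derivative
     (2 * Rf x y * SXx x y - SXf x y * Rx x y) / (2 * Wf x y * Rf x y)) (at x)"
proof -
  have W: "0 < Wf x y" and W2: "Wf x y * Wf x y = Rf x y" using Wf_pos Wf_sq assms by auto
  have "((\<lambda>x. SXf x y / Wf x y) has_real_derivative
     (SXx x y * Wf x y - SXf x y * (Rx x y / (2 * Wf x y))) / (Wf x y * Wf x y)) (at x)"
    using W by (intro DERIV_divide dW_x dSX_x assms) simp
  moreover have "(SXx x y * Wf x y - SXf x y * (Rx x y / (2 * Wf x y))) / (Wf x y * Wf x y)
     = (2 * (Wf x y * Wf x y) * SXx x y - SXf x y * Rx x y) / (2 * Wf x y * (Wf x y * Wf x y))"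
    using W by (simp add: field_simps)
  ultimately show ?thesis unfolding Tf_def W2 by (metis (no_types, lifting) DERIV_cong)
qed

lemma Ly_neg:
  assumes "-1 < x" "x < y" "y < 1"
  shows "((Ry x y*(y-x) - 6*Rf x y) + (6*SXf x y - 2*(y-x)*SXy x y) * Wf x y) / (2 * Wf x y * (y-x)^4) < 0"
proof -
  have h1: "0 < HP1 (1 - y) (y - x) (1 + x)" "0 < HP2 (1 - y) (y - x) (1 + x)"
    using assms by (auto intro!: HP1_pos HP2_pos)
  have "Ry x y*(y-x) - 6*Rf x y < 0" using h1 HP1_id[of x y] by simp
  moreover have "(6*SXf x y - 2*(y-x)*SXy x y)^2 * Rf x y < (Ry x y*(y-x) - 6*Rf x y)^2"
    using h1 HP2_id[of x y] by simp
  moreover have "0 \<le> Rf x y" using Rf_pos[of x y] assms by simp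
  ultimately have "(Ry x y*(y-x) - 6*Rf x y) + (6*SXf x y - 2*(y-x)*SXy x y) * Wf x y < 0"
    unfolding Wf_def by (rule sign_aux)
  moreover have "0 < 2 * Wf x y * (y-x)^4" using Wf_pos[of x y] assms by simp
  ultimately show ?thesis by (simp add: divide_neg_pos)
qed

lemma Lx_pos:
  assumes "-1 < x" "x < y" "y < 1"
  shows "0 < ((Rx x y*(y-x) + 6*Rf x y) - (2*(y-x)*SXx x y + 6*SXf x y) * Wf x y) / (2 * Wf x y * (y-x)^4)"
proof -
  have h1: "0 < HP3 (1 - y) (y - x) (1 + x)" "0 < HP4 (1 - y) (y - x) (1 + x)"
    using assms by (auto intro!: HP3_pos HP4_pos)
  have "- (Rx x y*(y-x) + 6*Rf x y) < 0" using h1 HP3_id[of x y] by simp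
  moreover have "(2*(y-x)*SXx x y + 6*SXf x y)^2 * Rf x y < (Rx x y*(y-x) + 6*Rf x y)^2"
    using h1 HP4_id[of x y] by simp
  hence "((2*(y-x)*SXx x y + 6*SXf x y))^2 * Rf x y < (- (Rx x y*(y-x) + 6*Rf x y))^2"
    by (simp only: power2_minus)
  moreover have "0 \<le> Rf x y" using Rf_pos[of x y] assms by simp
  ultimately have "- (Rx x y*(y-x) + 6*Rf x y) + ((2*(y-x)*SXx x y + 6*SXf x y)) * Wf x y < 0"
    unfolding Wf_def by (rule sign_aux)
  hence "0 < (Rx x y*(y-x) + 6*Rf x y) - (2*(y-x)*SXx x y + 6*SXf x y) * Wf x y" by (simp add: algebra_simps)
  moreover have "0 < 2 * Wf x y * (y-x)^4" using Wf_pos[of x y] assms by simp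
  ultimately show ?thesis by (rule divide_pos_pos)
qed

lemma Tx_pos:
  assumes "-1 < x" "x < y" "y < 1"
  shows "0 < (2 * Rf x y * SXx x y - SXf x y * Rx x y) / (2 * Wf x y * Rf x y)"
proof -
  have "0 < HP5 (1 - y) (y - x) (1 + x)" using assms by (auto intro!: HP5_pos)
  hence "0 < 2 * Rf x y * SXx x y - SXf x y * Rx x y" using HP5_id[of x y] by simp
  moreover have "0 < 2 * Wf x y * Rf x y" using Wf_pos[of x y] Rf_pos[of x y] assms by simp
  ultimately show ?thesis by simp
qed

lemma L_dec_y:
  assumes "-1 < x" "x < y1" "y1 < y2" "y2 \<le> 1"
  shows "Lf x y2 < Lf x y1"
proof (rule DERIV_neg_imp_decreasing_open[OF assms(3)])
  fix z assume "y1 < z" "z < y2"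
  thus "\<exists>D. ((\<lambda>y. Lf x y) has_real_derivative D) (at z) \<and> D < 0"
  proof -
    have "-1 \<le> x" "x < z" "z \<le> 1" "-1 < x" "z < 1" using assms \<open>y1 < z\<close> \<open>z < y2\<close> by auto
    thus ?thesis using dL_y[of x z] Ly_neg[of x z] by blast
  qed
next
  show "continuous_on {y1..y2} (\<lambda>y. Lf x y)"
    using assms by (intro continuous_at_imp_continuous_on ballI DERIV_isCont[OF dL_y]) auto
qed

lemma L_inc_x:
  assumes "-1 \<le> x1" "x1 < x2" "x2 < y" "y < 1"
  shows "Lf x1 y < Lf x2 y"
proof (rule DERIV_pos_imp_increasing_open[OF assms(2)])
  fix z assume "x1 < z" "z < x2"
  thus "\<exists>D. ((\<lambda>x. Lf x y) has_real_derivative D) (at z) \<and> 0 < D"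
  proof -
    have "-1 \<le> z" "z < y" "y \<le> 1" "-1 < z" "y < 1" using assms \<open>x1 < z\<close> \<open>z < x2\<close> by auto
    thus ?thesis using dL_x[of z y] Lx_pos[of z y] by blast
  qed
next
  show "continuous_on {x1..x2} (\<lambda>x. Lf x y)"
    using assms by (intro continuous_at_imp_continuous_on ballI DERIV_isCont[OF dL_x]) auto
qed

lemma T_inc_x:
  assumes "-1 < x1" "x1 < x2" "x2 < y" "y < 1"
  shows "Tf x1 y < Tf x2 y"
proof (rule DERIV_pos_imp_increasing_open[OF assms(2)])
  fix z assume "x1 < z" "z < x2"
  thus "\<exists>D. ((\<lambda>x. Tf x y) has_real_derivative D) (at z) \<and> 0 < D"
  proof -
    have "-1 \<le> z" "z < y" "y \<le> 1" "-1 < z" "y < 1" using assms \<open>x1 < z\<close> \<open>z < x2\<close> by auto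
    thus ?thesis using dT_x[of z y] Tx_pos[of z y] by blast
  qed
next
  show "continuous_on {x1..x2} (\<lambda>x. Tf x y)"
    using assms by (intro continuous_at_imp_continuous_on ballI DERIV_isCont[OF dT_x]) auto
qed

lemma T_inc_y:
  assumes "-1 < x" "x < y1" "y1 < y2" "y2 < 1"
  shows "Tf x y1 < Tf x y2"
proof -
  have "Tf (-y2) (-x) < Tf (-y1) (-x)" using assms by (intro T_inc_x) auto
  thus ?thesis using Tf_sym[of y2 x] Tf_sym[of y1 x] by simp
qed

lemma M_dec_y:
  assumes "-1 < x" "x < y1" "y1 < y2" "y2 \<le> 1"
  shows "Mf x y2 < Mf x y1"
  unfolding Mf_sym using assms by (intro L_inc_x) auto

lemma M_inc_x:
  assumes "-1 \<le> x1" "x1 < x2" "x2 < y" "y < 1"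
  shows "Mf x1 y < Mf x2 y"
  unfolding Mf_sym using assms by (intro L_dec_y) auto

lemma L_at_1:
  assumes "-1 < x" "x < 1" shows "Lf x 1 = 1"
proof -
  have "Rf x 1 = ((3+x)^2*(1-x))^2" unfolding Rf_def by algebra
  hence W: "Wf x 1 = (3+x)^2*(1-x)" unfolding Wf_def using assms by simp
  have S: "SXf x 1 = 8*(1+x)*(1-x)" unfolding SXf_def by algebra
  have "(3+x)^2*(1-x) - 8*(1+x)*(1-x) = (1-x)^3" by algebra
  moreover have "(1-x)^3 \<noteq> 0" using assms by simp
  ultimately show ?thesis unfolding Lf_def W S by simp
qed

lemma L_at_m1:
  assumes "-1 < y" "y \<le> 1" shows "Lf (-1) y = (y^2 - 14*y + 17) / (1+y)^2"
proof -
  have "Rf (-1) y = ((3-y)^2*(1+y))^2" unfolding Rf_def by algebra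
  hence W: "Wf (-1) y = (3-y)^2*(1+y)" unfolding Wf_def using assms by simp
  have S: "SXf (-1) y = 8*(y-1)*(1+y)" unfolding SXf_def by algebra
  have "(3-y)^2*(1+y) - 8*(y-1)*(1+y) = (1+y) * (y^2 - 14*y + 17)" by algebra
  moreover have "(y - -1)^3 = (1+y)*(1+y)^2" by algebra
  moreover have "1 + y \<noteq> 0" using assms by simp
  ultimately show ?thesis unfolding Lf_def W S by simp
qed

lemma N_diag:
  assumes "-1 < x" "x < 1" shows "SXf x x < Wf x x"
proof -
  have "Rf x x - (SXf x x)^2 = 108 * (1 - x^2)^4" unfolding Rf_def SXf_def by algebra
  moreover have "0 < 1 - x^2" using assms by (simp add: abs_square_less_1)
  hence "0 < 108 * (1 - x^2)^4" by simp
  ultimately have "(SXf x x)^2 < Rf x x" by linarith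
  hence "\<bar>SXf x x\<bar> < Wf x x" unfolding Wf_def using real_less_rsqrt by (metis abs_less_iff minus_less_iff power2_abs real_sqrt_abs real_sqrt_less_iff) 
  thus ?thesis by simp
qed

lemma L_big:
  assumes "-1 < x" "x < 1" "0 < lam"
  shows "\<exists>y. x < y \<and> y < 1 \<and> lam < Lf x y"
proof -
  define N where "N = (\<lambda>y. Wf x y - SXf x y)"
  define c where "c = N x / 2"
  have c: "0 < c" using N_diag[OF assms(1,2)] by (simp add: c_def N_def)
  have "isCont N x" unfolding N_def Wf_def Rf_def SXf_def by (intro continuous_intros)
  hence "N \<midarrow>x\<rightarrow> N x" by (simp add: isCont_def)
  from LIM_D[OF this c] obtain s where s: "0 < s" "\<forall>z. z \<noteq> x \<and> norm (z - x) < s \<longrightarrow> norm (N z - N x) < c"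
    by blast
  define t where "t = min (s/2) (min ((1-x)/2) (min (1/2) (c/(2*lam))))"
  have t0: "0 < t" using s c assms unfolding t_def by simp
  have t1: "t \<le> s/2" "t \<le> (1-x)/2" "t \<le> 1/2" "t \<le> c/(2*lam)" unfolding t_def by (simp_all only: min.coboundedI1 min.coboundedI2 order_refl)
  have t: "0 < t" "t < s" "t < 1 - x" "t \<le> 1/2" "t \<le> c/(2*lam)" using t0 t1 s assms by auto
  define y where "y = x + t"
  have "norm (N y - N x) < c" using s t by (simp add: y_def)
  hence "\<bar>N y - N x\<bar> < c" by simp
  hence Ny: "c < N y" unfolding c_def by linarith
  have "t^3 \<le> t"
  proof -
    have "t^2 \<le> 1" using t by (simp add: power_le_one)
    hence "t * t^2 \<le> t * 1" using t by (intro mult_left_mono) auto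
    thus ?thesis by (simp add: power3_eq_cube power2_eq_square)
  qed
  hence "lam * t^3 \<le> lam * t" using assms by (simp add: mult_left_mono)
  also have "lam * t \<le> c / 2" using t assms by (simp add: field_simps)
  finally have "lam * t^3 < N y" using Ny c by linarith
  hence "lam < N y / t^3" using t by (simp add: field_simps)
  moreover have "Lf x y = N y / t^3" unfolding Lf_def N_def y_def by simp
  ultimately show ?thesis using t by (intro exI[of _ y]) (auto simp: y_def)
qed

lemma g_ex:
  assumes "-1 < x" "x < 1" "1 < lam"
  shows "\<exists>!y. x < y \<and> y < 1 \<and> Lf x y = lam"
proof -
  obtain y1 where y1: "x < y1" "y1 < 1" "lam < Lf x y1" using L_big[of x lam] assms by auto
  have "continuous_on {y1..1} (Lf x)"
    using assms y1 by (intro continuous_at_imp_continuous_on ballI DERIV_isCont[OF dL_y]) auto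
  moreover have "Lf x 1 \<le> lam" using L_at_1 assms by simp
  ultimately obtain z where z: "y1 \<le> z" "z \<le> 1" "Lf x z = lam"
    using IVT2'[of "Lf x" 1 lam y1] y1 by auto
  have "z \<noteq> 1" using z L_at_1 assms by auto
  hence ex: "x < z \<and> z < 1 \<and> Lf x z = lam" using z y1 by auto
  show ?thesis
  proof (rule ex_ex1I)
    show "\<exists>y. x < y \<and> y < 1 \<and> Lf x y = lam" using ex by blast
  next
    fix u v assume u: "x < u \<and> u < 1 \<and> Lf x u = lam" and v: "x < v \<and> v < 1 \<and> Lf x v = lam"
    show "u = v"
    proof (rule ccontr)
      assume "u \<noteq> v"
      hence "u < v \<or> v < u" by auto
      thus False using L_dec_y[of x u v] L_dec_y[of x v u] u v assms by auto
    qed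
  qed
qed

definition gf :: "real \<Rightarrow> real \<Rightarrow> real" where
  "gf lam x = (THE y. x < y \<and> y < 1 \<and> Lf x y = lam)"

lemma gf:
  assumes "-1 < x" "x < 1" "1 < lam"
  shows "x < gf lam x" "gf lam x < 1" "Lf x (gf lam x) = lam"
  using theI'[OF g_ex[OF assms]] unfolding gf_def by auto

lemma L_cont_x: "x0 < y \<Longrightarrow> isCont (\<lambda>x. Lf x y) x0"
  unfolding Lf_def Wf_def Rf_def SXf_def by (intro continuous_intros) auto
lemma M_cont_x: "x0 < y \<Longrightarrow> isCont (\<lambda>x. Mf x y) x0"
  unfolding Mf_def Wf_def Rf_def SXf_def by (intro continuous_intros) auto

lemma cont_gt:
  fixes f :: "real \<Rightarrow> real"
  assumes "isCont f x0" "c < f x0"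
  shows "\<exists>s>0. \<forall>x. \<bar>x - x0\<bar> < s \<longrightarrow> c < (f x::real)"
proof -
  have "f \<midarrow>x0\<rightarrow> f x0" using assms by (simp add: isCont_def)
  from LIM_D[OF this, of "f x0 - c"] assms obtain s where
    s: "0 < s" "\<forall>x. x \<noteq> x0 \<and> norm (x - x0) < s \<longrightarrow> norm (f x - f x0) < f x0 - c" by auto
  have "\<forall>x. \<bar>x - x0\<bar> < s \<longrightarrow> c < f x"
  proof (intro allI impI)
    fix x assume "\<bar>x - x0\<bar> < s"
    show "c < f x"
    proof (cases "x = x0")
      case True thus ?thesis using assms by simp
    next
      case False
      hence "\<bar>f x - f x0\<bar> < f x0 - c" using s \<open>\<bar>x - x0\<bar> < s\<close> by auto
      thus ?thesis by linarith
    qed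
  qed
  thus ?thesis using s by blast
qed

lemma cont_lt:
  fixes f :: "real \<Rightarrow> real"
  assumes "isCont f x0" "f x0 < c"
  shows "\<exists>s>0. \<forall>x. \<bar>x - x0\<bar> < s \<longrightarrow> (f x::real) < c"
proof -
  have "isCont (\<lambda>x. - f x) x0" using assms by (intro continuous_intros)
  from cont_gt[OF this, of "-c"] assms show ?thesis by auto
qed

lemma gf_cont:
  assumes "-1 < x0" "x0 < 1" "1 < lam"
  shows "isCont (gf lam) x0"
  unfolding isCont_def
proof (rule LIM_I)
  fix r :: real assume r: "0 < r"
  define y0 where "y0 = gf lam x0"
  have y0: "x0 < y0" "y0 < 1" "Lf x0 y0 = lam" using gf[OF assms] by (auto simp: y0_def)
  define e where "e = min (r/2) ((y0 - x0)/2)"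
  have e: "0 < e" "e \<le> r/2" "e \<le> (y0-x0)/2" using r y0 unfolding e_def by (auto simp only: min.cobounded1 min.cobounded2 min_less_iff_conj) auto
  define ym where "ym = y0 - e"
  define yp where "yp = min (y0 + e) 1"
  have ym: "x0 < ym" "ym < y0" using e by (auto simp: ym_def)
  have yp: "y0 < yp" "yp \<le> 1" "yp \<le> y0 + e" using e y0 by (auto simp: yp_def)
  have "lam < Lf x0 ym" using L_dec_y[of x0 ym y0] ym y0 assms by auto
  from cont_gt[OF L_cont_x[OF ym(1)] this] obtain s1 where s1: "s1 > 0" "\<forall>x. \<bar>x - x0\<bar> < s1 \<longrightarrow> lam < Lf x ym" by auto
  have "Lf x0 yp < lam" using L_dec_y[of x0 y0 yp] yp y0 assms by auto
  from cont_lt[OF L_cont_x this] obtain s2 where s2: "s2 > 0" "\<forall>x. \<bar>x - x0\<bar> < s2 \<longrightarrow> Lf x yp < lam"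
    using ym yp by auto
  define s where "s = min (min s1 s2) (min (ym - x0) (x0 + 1))"
  have s: "0 < s" using s1 s2 ym assms unfolding s_def by auto
  have s': "s \<le> s1" "s \<le> s2" "s \<le> ym - x0" "s \<le> x0 + 1" unfolding s_def by linarith+
  show "\<exists>s>0. \<forall>x. x \<noteq> x0 \<and> norm (x - x0) < s \<longrightarrow> norm (gf lam x - y0) < r"
  proof (intro exI[of _ s] conjI allI impI)
    show "0 < s" by (fact s(1))
    fix x assume "x \<noteq> x0 \<and> norm (x - x0) < s"
    hence xs: "\<bar>x - x0\<bar> < s" by simp
    hence x: "-1 < x" "x < ym" using s' by auto
    have x1: "x < 1" using x ym y0 by linarith
    define g where "g = gf lam x"
    have g: "x < g" "g < 1" "Lf x g = lam" using gf[OF x(1) x1 assms(3)] by (auto simp: g_def)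
    have Lm: "lam < Lf x ym" using s1 s' xs by auto
    have Lp: "Lf x yp < lam" using s2 s' xs by auto
    have "ym < g"
    proof (rule ccontr)
      assume "\<not> ym < g"
      hence "g = ym \<or> g < ym" by auto
      thus False
      proof
        assume "g = ym" thus False using Lm g by simp
      next
        assume "g < ym" thus False using L_dec_y[of x g ym] g x Lm ym y0 by auto
      qed
    qed
    moreover have "g < yp"
    proof (rule ccontr)
      assume "\<not> g < yp"
      hence "g = yp \<or> yp < g" by auto
      thus False
      proof
        assume "g = yp" thus False using Lp g by simp
      next
        assume "yp < g" thus False using L_dec_y[of x yp g] g x Lp ym yp y0 by auto
      qed
    qed
    ultimately show "norm (gf lam x - y0) < r" using yp e unfolding g_def ym_def by auto
  qed
qed

lemma exists_LM:
  assumes lam: "1 < lam" and mu: "1 < mu"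
  shows "\<exists>x y. -1 < x \<and> x < y \<and> y < 1 \<and> Lf x y = lam \<and> Mf x y = mu"
proof -
  define ys where "ys = 1/lam - 1"
  have ys: "-1 < ys" "ys < 0" "1 + ys = 1/lam" using lam by (auto simp: ys_def)
  have "0 \<le> ys^2" by simp
  hence "17 \<le> ys^2 - 14*ys + 17" using ys by linarith
  hence "17 * lam^2 \<le> (ys^2 - 14*ys + 17) * lam^2" by (simp add: mult_right_mono)
  moreover have "lam < 17 * lam^2" using lam by (simp add: power2_eq_square)
  moreover have "Lf (-1) ys = (ys^2 - 14*ys + 17) * lam^2"
    using L_at_m1[of ys] ys by (simp add: field_simps)
  ultimately have Lys: "lam < Lf (-1) ys" by linarith
  have Mys: "Mf (-1) ys < mu" using Mf_sym[of "-1" ys] L_at_1[of "-ys"] ys mu by simp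
  obtain s1 where s1: "s1 > 0" "\<forall>x. \<bar>x - (-1)\<bar> < s1 \<longrightarrow> lam < Lf x ys"
    using cont_gt[OF L_cont_x Lys] ys by auto
  obtain s2 where s2: "s2 > 0" "\<forall>x. \<bar>x - (-1)\<bar> < s2 \<longrightarrow> Mf x ys < mu"
    using cont_lt[OF M_cont_x Mys] ys by auto
  define m where "m = min (min s1 s2) (1 + ys)"
  have m: "0 < m" using s1 s2 ys(1) unfolding m_def by auto
  have m': "m \<le> s1" "m \<le> s2" "m \<le> 1 + ys" unfolding m_def by linarith+
  define xL where "xL = -1 + m / 2"
  have xL: "-1 < xL" "xL < ys" "\<bar>xL - (-1)\<bar> < s1" "\<bar>xL - (-1)\<bar> < s2"
    using m m' unfolding xL_def by auto
  define gL where "gL = gf lam xL"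
  have gL: "xL < gL" "gL < 1" "Lf xL gL = lam" using gf[of xL lam] xL ys lam by (auto simp: gL_def)
  have "ys < gL"
  proof (rule ccontr)
    assume "\<not> ys < gL"
    hence "gL = ys \<or> gL < ys" by auto
    thus False
    proof
      assume "gL = ys"
      have "lam < Lf xL ys" using s1(2) xL(3) by blast
      thus False using \<open>gL = ys\<close> gL(3) by simp
    next
      assume "gL < ys"
      have "lam < Lf xL ys" using s1(2) xL(3) by blast
      moreover have "Lf xL ys < Lf xL gL" using L_dec_y[of xL gL ys] \<open>gL < ys\<close> xL gL ys by auto
      ultimately show False using gL(3) by simp
    qed
  qed
  hence "Mf xL gL < Mf xL ys" using M_dec_y[of xL ys gL] xL gL by auto
  moreover have "Mf xL ys < mu" using s2(2) xL(4) by blast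
  ultimately have psiL: "Mf xL gL < mu" by linarith
  define x0 where "x0 = 1 - 1/mu"
  have x0: "0 < x0" "x0 < 1" "1 - x0 = 1/mu" using mu by (auto simp: x0_def)
  define g0 where "g0 = gf lam x0"
  have g0: "x0 < g0" "g0 < 1" "Lf x0 g0 = lam" using gf[of x0 lam] x0 lam by (auto simp: g0_def)
  have "Mf x0 1 = Lf (-1) (-x0)" by (simp add: Mf_sym)
  also have "\<dots> = (x0^2 + 14*x0 + 17) * mu^2" using L_at_m1[of "-x0"] x0 by (simp add: field_simps)
  finally have M1: "Mf x0 1 = (x0^2 + 14*x0 + 17) * mu^2" .
  have "0 \<le> x0^2" by simp
  hence "17 \<le> x0^2 + 14*x0 + 17" using x0 by linarith
  hence "17 * mu^2 \<le> (x0^2 + 14*x0 + 17) * mu^2" by (simp add: mult_right_mono)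
  moreover have "mu < 17 * mu^2" using mu by (simp add: power2_eq_square)
  ultimately have "mu < Mf x0 1" using M1 by linarith
  moreover have "Mf x0 1 < Mf x0 g0" using M_dec_y[of x0 g0 1] x0 g0 by auto
  ultimately have psi0: "mu < Mf x0 g0" by linarith
  have xLx0: "xL < x0" using xL ys x0 by linarith
  have cont: "continuous_on {xL..x0} (\<lambda>x. Mf x (gf lam x))"
  proof (intro continuous_at_imp_continuous_on ballI)
    fix z assume z: "z \<in> {xL..x0}"
    hence zz: "-1 < z" "z < 1" using xL x0 by auto
    have gc: "isCont (gf lam) z" using gf_cont[OF zz lam] .
    have "gf lam z - z \<noteq> 0" using gf[OF zz lam] by simp
    thus "isCont (\<lambda>x. Mf x (gf lam x)) z"
      unfolding Mf_def Wf_def Rf_def SXf_def using gc by (intro continuous_intros) auto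
  qed
  obtain x where x: "xL \<le> x" "x \<le> x0" "Mf x (gf lam x) = mu"
    using IVT'[of "\<lambda>x. Mf x (gf lam x)" xL mu x0] psiL psi0 xLx0 cont
    unfolding gL_def g0_def by auto
  have "-1 < x" "x < 1" using x xL x0 by auto
  thus ?thesis using gf[of x lam] lam x by (intro exI[of _ x] exI[of _ "gf lam x"]) auto
qed

lemma T_LM:
  assumes "-1 \<le> x" "x < y" "y \<le> 1"
  shows "Tf x y = (Mf x y - Lf x y) / (Mf x y + Lf x y)"
proof -
  have W: "0 < Wf x y" using Wf_pos assms by blast
  have d: "(y - x)^3 \<noteq> 0" using assms by simp
  show ?thesis unfolding Tf_def Mf_def Lf_def using W d by (simp add: field_simps)
qed

lemma uniq_aux:
  assumes "-1 < x1" "x1 < y1" "y1 < 1" "-1 < x2" "x2 < y2" "y2 < 1" "x1 < x2"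
    and L: "Lf x1 y1 = Lf x2 y2" and T: "Tf x1 y1 = Tf x2 y2"
  shows False
proof (cases "y2 \<le> y1")
  case True
  have "Lf x1 y1 < Lf x2 y1" using assms True by (intro L_inc_x) auto
  moreover have "Lf x2 y1 \<le> Lf x2 y2"
  proof (cases "y2 = y1")
    case False thus ?thesis using L_dec_y[of x2 y2 y1] True assms by auto
  qed simp
  ultimately show False using L by simp
next
  case False
  have "Tf x1 y1 < Tf x1 y2" using assms False by (intro T_inc_y) auto
  moreover have "Tf x1 y2 < Tf x2 y2" using assms by (intro T_inc_x) auto
  ultimately show False using T by simp
qed

lemma uniq_LM:
  assumes "-1 < x1" "x1 < y1" "y1 < 1" "-1 < x2" "x2 < y2" "y2 < 1"
    and L: "Lf x1 y1 = Lf x2 y2" and M: "Mf x1 y1 = Mf x2 y2"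
  shows "x1 = x2 \<and> y1 = y2"
proof -
  have T: "Tf x1 y1 = Tf x2 y2" using T_LM[of x1 y1] T_LM[of x2 y2] assms L M by simp
  have "x1 = x2"
  proof (rule ccontr)
    assume "x1 \<noteq> x2"
    hence "x1 < x2 \<or> x2 < x1" by auto
    thus False using uniq_aux[of x1 y1 x2 y2] uniq_aux[of x2 y2 x1 y1] assms L T by auto
  qed
  moreover have "y1 = y2"
  proof (rule ccontr)
    assume "y1 \<noteq> y2"
    hence "y1 < y2 \<or> y2 < y1" by auto
    thus False using L_dec_y[of x1 y1 y2] L_dec_y[of x1 y2 y1] assms L \<open>x1 = x2\<close> by auto
  qed
  ultimately show ?thesis by simp
qed

lemma sys_iff:
  assumes "-1 < al" "al < a" "a < 1" "1 < lam" "1 < mu"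
  shows "sys lam mu al a \<longleftrightarrow> (Lf al a = lam \<and> Mf al a = mu)"
proof -
  have W: "0 < Wf al a" and W2: "Wf al a * Wf al a = Rf al a" using Wf_pos Wf_sq assms by auto
  have d: "0 < (a - al)^3" using assms by simp
  have SX: "SXf al a = (a + al) * (3 - a*al - a - al) * (3 - a*al + a + al)" unfolding SXf_def by algebra
  have R: "4 * Rf al a = 4 * (3 + a*al)^3 * (1 - a*al) * (2 + a + al) * (2 - a - al)" unfolding Rf_def by algebra
  show ?thesis
  proof
    assume s: "sys lam mu al a"
    have e1: "2 * (a + al) * (3 - a*al - a - al) * (3 - a*al + a + al) + (lam - mu) * (a - al)^3 = 0"
      and e2: "(lam + mu)^2 * (a - al)^6 = 4 * (3 + a*al)^3 * (1 - a*al) * (2 + a + al) * (2 - a - al)"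
      using s unfolding sys_def by auto
    have h1: "(lam - mu) * (a - al)^3 = - 2 * SXf al a" using e1 unfolding SX by algebra
    have e2': "(lam + mu)^2 * (a - al)^6 = 4 * Rf al a" using e2 R by simp
    have "((lam + mu) * (a - al)^3)^2 = (2 * Wf al a)^2"
      using e2' W2 by algebra
    hence h2: "(lam + mu) * (a - al)^3 = 2 * Wf al a"
    proof (rule power2_eq_imp_eq)
      show "0 \<le> (lam + mu) * (a - al)^3" using d assms by simp
      show "0 \<le> 2 * Wf al a" using W by simp
    qed
    have "Wf al a - SXf al a = lam * (a - al)^3" using h1 h2 by algebra
    hence l: "Lf al a = lam" unfolding Lf_def using d by simp
    have "Wf al a + SXf al a = mu * (a - al)^3" using h1 h2 by algebra
    hence "Mf al a = mu" unfolding Mf_def using d by simp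
    thus "Lf al a = lam \<and> Mf al a = mu" using l by simp
  next
    assume h: "Lf al a = lam \<and> Mf al a = mu"
    have hl: "Wf al a - SXf al a = lam * (a - al)^3" using h d unfolding Lf_def by (simp add: divide_eq_eq)
    have hm: "Wf al a + SXf al a = mu * (a - al)^3" using h d unfolding Mf_def by (simp add: divide_eq_eq)
    have h1: "(lam - mu) * (a - al)^3 = - 2 * SXf al a" using hl hm by algebra
    have h2: "(lam + mu) * (a - al)^3 = 2 * Wf al a" using hl hm by algebra
    have e1: "2 * (a + al) * (3 - a*al - a - al) * (3 - a*al + a + al) + (lam - mu) * (a - al)^3 = 0"
      using h1 unfolding SX by algebra
    have "(lam + mu)^2 * (a - al)^6 = ((lam + mu) * (a - al)^3)^2" by algebra
    also have "\<dots> = 4 * Rf al a" unfolding h2 W2[symmetric] by algebra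
    finally have e2: "(lam + mu)^2 * (a - al)^6 = 4 * (3 + a*al)^3 * (1 - a*al) * (2 + a + al) * (2 - a - al)"
      using R by simp
    show "sys lam mu al a" unfolding sys_def using e1 e2 by simp
  qed
qed


lemma Gt_sys:
  fixes f :: "real \<Rightarrow> real"
  assumes ord: "bt < -1" "-1 < al" "al < a" "a < 1" "1 < b"
    and sum: "bt + al + a + b = 0"
    and con: "(1 - al*a)*(b^2 + (a+al)*b - 3) + (a - al)^2 = 0"
    and rep: "\<And>z. z \<noteq> 1 \<Longrightarrow> z \<noteq> -1 \<Longrightarrow>
       f z = cf * (e + z + coefA bt al a b / (1 - z) - coefB bt al a b / (1 + z))"
    and v1: "f bt = - mu" and v2: "f al = -1" and v3: "f a = 1" and v4: "f b = lam"
  shows "sys lam mu al a" "cf \<noteq> 0"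
    "\<And>z. z \<noteq> 1 \<Longrightarrow> z \<noteq> -1 \<Longrightarrow> Hfun bt al a b z = f z / cf"
proof -
  define hbt where "hbt = 4*bt + (1-al)*(1-a)*(1-b) - (1+al)*(1+a)*(1+b)"
  define hal where "hal = 4*al + (1-bt)*(1-a)*(1-b) - (1+bt)*(1+a)*(1+b)"
  define ha where "ha = 4*a + (1-bt)*(1-al)*(1-b) - (1+bt)*(1+al)*(1+b)"
  define hb where "hb = 4*b + (1-bt)*(1-al)*(1-a) - (1+bt)*(1+al)*(1+a)"
  have nz: "1 - bt \<noteq> 0" "1 + bt \<noteq> 0" "1 - al \<noteq> 0" "1 + al \<noteq> 0" "1 - a \<noteq> 0" "1 + a \<noteq> 0"
    "1 - b \<noteq> 0" "1 + b \<noteq> 0" using ord by auto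
  have ca: "coefA bt al a b / (1 - bt) = (1-al)*(1-a)*(1-b)/4" "coefB bt al a b / (1 + bt) = (1+al)*(1+a)*(1+b)/4"
    unfolding coefA_def coefB_def using nz by (simp_all add: field_simps)
  have "f bt = cf * (e + bt + coefA bt al a b / (1 - bt) - coefB bt al a b / (1 + bt))"
    using rep[of bt] ord by auto
  hence "- mu = cf * (e + bt + (1-al)*(1-a)*(1-b)/4 - (1+al)*(1+a)*(1+b)/4)" using v1 ca by simp
  hence w1: "cf * (4*e + hbt) = - 4 * mu" unfolding hbt_def by (simp add: field_simps)
  have ca: "coefA bt al a b / (1 - al) = (1-bt)*(1-a)*(1-b)/4" "coefB bt al a b / (1 + al) = (1+bt)*(1+a)*(1+b)/4"
    unfolding coefA_def coefB_def using nz by (simp_all add: field_simps)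
  have "f al = cf * (e + al + coefA bt al a b / (1 - al) - coefB bt al a b / (1 + al))"
    using rep[of al] ord by auto
  hence "- 1 = cf * (e + al + (1-bt)*(1-a)*(1-b)/4 - (1+bt)*(1+a)*(1+b)/4)" using v2 ca by simp
  hence w2: "cf * (4*e + hal) = - 4" unfolding hal_def by (simp add: field_simps)
  have ca: "coefA bt al a b / (1 - a) = (1-bt)*(1-al)*(1-b)/4" "coefB bt al a b / (1 + a) = (1+bt)*(1+al)*(1+b)/4"
    unfolding coefA_def coefB_def using nz by (simp_all add: field_simps)
  have "f a = cf * (e + a + coefA bt al a b / (1 - a) - coefB bt al a b / (1 + a))"
    using rep[of a] ord by auto
  hence "1 = cf * (e + a + (1-bt)*(1-al)*(1-b)/4 - (1+bt)*(1+al)*(1+b)/4)" using v3 ca by simp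
  hence w3: "cf * (4*e + ha) = 4" unfolding ha_def by (simp add: field_simps)
  have ca: "coefA bt al a b / (1 - b) = (1-bt)*(1-al)*(1-a)/4" "coefB bt al a b / (1 + b) = (1+bt)*(1+al)*(1+a)/4"
    unfolding coefA_def coefB_def using nz by (simp_all add: field_simps)
  have "f b = cf * (e + b + coefA bt al a b / (1 - b) - coefB bt al a b / (1 + b))"
    using rep[of b] ord by auto
  hence "lam = cf * (e + b + (1-bt)*(1-al)*(1-a)/4 - (1+bt)*(1+al)*(1+a)/4)" using v4 ca by simp
  hence w4: "cf * (4*e + hb) = 4 * lam" unfolding hb_def by (simp add: field_simps)
  show "cf \<noteq> 0" using w3 by auto
  have btd: "bt = -(al + a + b)" using sum by simp
  have F1: "(1 - a*al)*(ha - hal) = 2*(a - al)^3"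
  proof -
    have "ha - hal = 2*(a - al)*(3 - b^2 - (a+al)*b)" unfolding ha_def hal_def btd by algebra
    moreover have "(1 - a*al)*(3 - b^2 - (a+al)*b) - (a - al)^2 = - ((1 - al*a)*(b^2 + (a+al)*b - 3) + (a - al)^2)"
      by algebra
    hence "(1 - a*al)*(3 - b^2 - (a+al)*b) = (a - al)^2" unfolding con by simp
    ultimately show ?thesis by algebra
  qed
  have "(1 - a*al)*(hb + hbt - ha - hal) + 2*(a+al)*((3 - a*al)^2 - (a+al)^2)
     = -2*(a+al)*((1 - al*a)*(b^2 + (a+al)*b - 3) + (a - al)^2)"
    unfolding hb_def hbt_def ha_def hal_def btd by algebra
  hence "(1 - a*al)*(hb + hbt - ha - hal) + 2*(a+al)*((3 - a*al)^2 - (a+al)^2) = 0"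
    unfolding con by simp
  hence F2: "(1 - a*al)*(hb + hbt - ha - hal) = - (2*(a+al)*((3 - a*al)^2 - (a+al)^2))"
    by (simp only: add_eq_0_iff2)
  have F3: "hb - hbt = 2*(3 + a*al)*(b - bt)"
    unfolding hb_def hbt_def btd by algebra
  have "(1 - a*al)*(b - bt)^2 - (3 + a*al)*(4 - (a+al)^2) = 4*((1 - al*a)*(b^2 + (a+al)*b - 3) + (a - al)^2)"
    unfolding btd by algebra
  hence F4: "(1 - a*al)*(b - bt)^2 = (3 + a*al)*(4 - (a+al)^2)"
    unfolding con by simp
  have c1: "cf*(ha - hal) = 8" using w2 w3 by algebra
  have c2: "cf*(8*e + ha + hal) = 0" using w2 w3 by algebra
  have lm: "4*(lam - mu) = cf*(hb + hbt - ha - hal)" using w1 w4 c2 by algebra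
  have lp: "4*(lam + mu) = cf*(hb - hbt)" using w1 w4 by algebra
  have "8 * ((lam - mu) * (a - al)^3) = (cf*(ha - hal)) * ((1 - a*al)*(hb + hbt - ha - hal))"
    using lm F1 by algebra
  also have "\<dots> = 8 * (- (2*(a+al)*((3 - a*al)^2 - (a+al)^2)))" unfolding c1 F2 by simp
  finally have s1: "2 * (a + al) * (3 - a*al - a - al) * (3 - a*al + a + al) + (lam - mu) * (a - al)^3 = 0"
    by algebra
  have "8 * ((lam + mu) * (a - al)^3) = (cf*(ha - hal)) * (1 - a*al) * (hb - hbt)"
    using lp F1 by algebra
  also have "\<dots> = 8 * (2 * (1 - a*al) * ((3 + a*al)*(b - bt)))" unfolding c1 F3 by algebra
  finally have "(lam + mu)^2 * (a - al)^6 = 4 * (3 + a*al)^2 * (1 - a*al) * ((1 - a*al)*(b - bt)^2)"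
    by algebra
  hence s2: "(lam + mu)^2 * (a - al)^6 = 4 * (3 + a*al)^3 * (1 - a*al) * (2 + a + al) * (2 - a - al)"
    unfolding F4 by algebra
  show "sys lam mu al a" unfolding sys_def using s1 s2 by simp
  have cfnz: "cf \<noteq> 0" using w3 by auto
  have "8*e + ha + hal = 0" using c2 cfnz by simp
  hence e8: "8*e = -(ha + hal)" by (simp add: algebra_simps)
  have cA: "8 * coefA bt al a b = 2*(1-bt)*(1-al)*(1-a)*(1-b)" by (simp add: coefA_def)
  have cB: "8 * coefB bt al a b = 2*(1+bt)*(1+al)*(1+a)*(1+b)" by (simp add: coefB_def)
  have p1: "1 - al*a \<noteq> 0"
  proof -
    have "0 < (1-al)*(1+a)" using ord by (intro mult_pos_pos) auto
    moreover have "0 < (1+al)*(1-a)" using ord by (intro mult_pos_pos) auto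
    ultimately have "0 < (1-al)*(1+a) + (1+al)*(1-a)" by linarith
    moreover have "(1-al)*(1+a) + (1+al)*(1-a) = 2 - 2*(al*a)" by algebra
    ultimately show ?thesis by linarith
  qed
  have ch: "8*(1 - al*a)*coefh al a = 2*(a+al)*(2*(a*al)*(1-a*al) - (a-al)^2)"
    using p1 unfolding coefh_def by (simp add: field_simps)
  have "2*(a+al)*(2*(a*al)*(1-a*al) - (a-al)^2) + (1-a*al)*(- (2*(1-bt)*(1-al)*(1-a)*(1-b))
      + 2*(1+bt)*(1+al)*(1+a)*(1+b) + ha + hal)
     = -2*(a+al)*((1 - al*a)*(b^2 + (a+al)*b - 3) + (a - al)^2)"
    unfolding ha_def hal_def btd by algebra
  hence "2*(a+al)*(2*(a*al)*(1-a*al) - (a-al)^2) + (1-a*al)*(- (2*(1-bt)*(1-al)*(1-a)*(1-b))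
      + 2*(1+bt)*(1+al)*(1+a)*(1+b) + ha + hal) = 0" unfolding con by simp
  hence "(1 - al*a) * (8 * (coefh al a - coefA bt al a b + coefB bt al a b - e)) = 0"
    unfolding ch[symmetric] cA[symmetric] cB[symmetric] using e8 by algebra
  hence hA: "coefh al a - coefA bt al a b + coefB bt al a b = e" using p1 by simp
  fix z :: real assume z: "z \<noteq> 1" "z \<noteq> -1"
  have z': "1 - z \<noteq> 0" "1 + z \<noteq> 0" using z by auto
  have "f z / cf = e + z + coefA bt al a b / (1 - z) - coefB bt al a b / (1 + z)"
    using rep[OF z] cfnz by simp
  also have "\<dots> = coefh al a + z + coefA bt al a b * z / (1 - z) + coefB bt al a b * z / (1 + z)"
    unfolding hA[symmetric] using z' by (simp add: field_simps)
  finally show "Hfun bt al a b z = f z / cf" unfolding Hfun_def by simp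
qed

lemma vieta4:
  fixes r1 r2 r3 r4 c0 c1 c2 c3 :: real
  assumes n: "r1 \<noteq> r2" "r1 \<noteq> r3" "r1 \<noteq> r4" "r2 \<noteq> r3" "r2 \<noteq> r4" "r3 \<noteq> r4"
  and f1: "r1^4 + c3*r1^3 + c2*r1^2 + c1*r1 + c0 = 0"
  and f2: "r2^4 + c3*r2^3 + c2*r2^2 + c1*r2 + c0 = 0"
  and f3: "r3^4 + c3*r3^3 + c2*r3^2 + c1*r3 + c0 = 0"
  and f4: "r4^4 + c3*r4^3 + c2*r4^2 + c1*r4 + c0 = 0"
  shows "c3 = -(r1+r2+r3+r4)"
    "c2 = r1*r2 + r1*r3 + r1*r4 + r2*r3 + r2*r4 + r3*r4"
    "c1 = -(r1*r2*r3 + r1*r2*r4 + r1*r3*r4 + r2*r3*r4)"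
    "c0 = r1*r2*r3*r4"
proof -
  define G1 where "G1 = (\<lambda>x y. x^3+x^2*y+x*y^2+y^3 + c3*(x^2+x*y+y^2) + c2*(x+y) + (c1::real))"
  define G2 where "G2 = (\<lambda>x y z. x^2+y^2+z^2+x*y+x*z+y*z + c3*(x+y+z) + (c2::real))"
  have "(r1 - r2) * G1 r1 r2 = 0" using f1 f2 unfolding G1_def by algebra
  hence g12: "G1 r1 r2 = 0" using n by simp
  have "(r1 - r3) * G1 r1 r3 = 0" using f1 f3 unfolding G1_def by algebra
  hence g13: "G1 r1 r3 = 0" using n by simp
  have "(r1 - r4) * G1 r1 r4 = 0" using f1 f4 unfolding G1_def by algebra
  hence g14: "G1 r1 r4 = 0" using n by simp
  have "(r2 - r3) * G2 r1 r2 r3 = 0" using g12 g13 unfolding G1_def G2_def by algebra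
  hence h3: "G2 r1 r2 r3 = 0" using n by simp
  have "(r2 - r4) * G2 r1 r2 r4 = 0" using g12 g14 unfolding G1_def G2_def by algebra
  hence h4: "G2 r1 r2 r4 = 0" using n by simp
  have "(r3 - r4) * (r1 + r2 + r3 + r4 + c3) = 0" using h3 h4 unfolding G2_def by algebra
  hence c3: "c3 = -(r1+r2+r3+r4)" using n by simp
  show "c3 = -(r1+r2+r3+r4)" by (fact c3)
  show c2: "c2 = r1*r2 + r1*r3 + r1*r4 + r2*r3 + r2*r4 + r3*r4" using h3 c3 unfolding G2_def by algebra
  show c1: "c1 = -(r1*r2*r3 + r1*r2*r4 + r1*r3*r4 + r2*r3*r4)" using g12 c3 c2 unfolding G1_def by algebra
  show "c0 = r1*r2*r3*r4" using f1 c3 c2 c1 by algebra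
qed

lemma pole_zero:
  assumes "is_real_pole (ratfun P Q) x" shows "poly Q x = 0"
proof (rule ccontr)
  assume nz: "poly Q x \<noteq> 0"
  have "isCont (\<lambda>z. \<bar>ratfun P Q z\<bar>) x" unfolding ratfun_def using nz by (intro continuous_intros) auto
  hence "((\<lambda>z. \<bar>ratfun P Q z\<bar>) \<longlongrightarrow> \<bar>ratfun P Q x\<bar>) (at x)" by (simp add: isCont_def)
  moreover have "filterlim (\<lambda>z. \<bar>ratfun P Q z\<bar>) at_infinity (at x)"
    using assms unfolding is_real_pole_def by (rule filterlim_at_top_imp_at_infinity)
  ultimately show False using not_tendsto_and_filterlim_at_infinity[of "at x"] by auto
qed

lemma poly3: assumes "degree P = 3" shows "poly P z = coeff P 0 + coeff P 1 * z + coeff P 2 * z^2 + coeff P 3 * (z::real)^3"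
proof -
  have "poly P z = (\<Sum>i\<le>degree P. coeff P i * z^i)" by (rule poly_altdef)
  also have "\<dots> = coeff P 0 + coeff P 1 * z + coeff P 2 * z^2 + coeff P 3 * z^3"
    unfolding assms by (simp add: eval_nat_numeral algebra_simps)
  finally show ?thesis .
qed
lemma poly2: assumes "degree P = 2" shows "poly P z = coeff P 0 + coeff P 1 * z + coeff P 2 * (z::real)^2"
proof -
  have "poly P z = (\<Sum>i\<le>degree P. coeff P i * z^i)" by (rule poly_altdef)
  also have "\<dots> = coeff P 0 + coeff P 1 * z + coeff P 2 * z^2"
    unfolding assms by (simp add: eval_nat_numeral algebra_simps)
  finally show ?thesis .
qed

lemma quartic_of_deriv:
  fixes p0 p1 p2 p3 q2 r :: real
  assumes q2: "q2 \<noteq> 0" and r: "r^2 \<noteq> 1"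
    and d: "((\<lambda>z. (p0+p1*z+p2*z^2+p3*z^3)/(q2*(z^2-1))) has_real_derivative 0) (at r)"
  shows "p3*r^4 - (p1+3*p3)*r^2 - 2*(p0+p2)*r - p1 = 0"
proof -
  have dn: "((\<lambda>z. p0+p1*z+p2*z^2+p3*z^3) has_real_derivative (p1+2*p2*r+3*p3*r^2)) (at r)"
    by (rule derivative_eq_intros refl | simp)+
  have dd: "((\<lambda>z. q2*(z^2-1)) has_real_derivative q2*(2*r)) (at r)"
    by (rule derivative_eq_intros refl | simp)+
  have nz: "q2*(r^2-1) \<noteq> 0" using q2 r by simp
  have "((\<lambda>z. (p0+p1*z+p2*z^2+p3*z^3)/(q2*(z^2-1))) has_real_derivative
     ((p1+2*p2*r+3*p3*r^2)*(q2*(r^2-1)) - (p0+p1*r+p2*r^2+p3*r^3)*(q2*(2*r))) / ((q2*(r^2-1))*(q2*(r^2-1)))) (at r)"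
    by (rule DERIV_divide[OF dn dd nz])
  from DERIV_unique[OF this d] nz
  have "(p1+2*p2*r+3*p3*r^2)*(q2*(r^2-1)) - (p0+p1*r+p2*r^2+p3*r^3)*(q2*(2*r)) = 0" by simp
  moreover have "(p1+2*p2*r+3*p3*r^2)*(q2*(r^2-1)) - (p0+p1*r+p2*r^2+p3*r^3)*(q2*(2*r))
     = q2 * (p3*r^4 - (p1+3*p3)*r^2 - 2*(p0+p2)*r - p1)" by algebra
  ultimately show ?thesis using q2 by simp
qed


lemma Gt_rep:
  assumes G: "isGtilde lam mu P Q"
  obtains bt al a b cf e where "bt < -1" "-1 < al" "al < a" "a < 1" "1 < b"
    "bt + al + a + b = 0" "(1 - al*a)*(b^2 + (a+al)*b - 3) + (a - al)^2 = 0"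
    "\<And>z. z \<noteq> 1 \<Longrightarrow> z \<noteq> -1 \<Longrightarrow>
       ratfun P Q z = cf * (e + z + coefA bt al a b / (1 - z) - coefB bt al a b / (1 + z))"
    "ratfun P Q bt = - mu" "ratfun P Q al = -1" "ratfun P Q a = 1" "ratfun P Q b = lam"
    "((\<lambda>z. ratfun P Q z / z) \<longlongrightarrow> cf) at_top"
proof -
  from G obtain bt al a b where dP: "degree P = 3" and dQ: "degree Q = 2"
    and pm: "is_real_pole (ratfun P Q) (-1)" and pp: "is_real_pole (ratfun P Q) 1"
    and ord: "bt < -1" "-1 < al" "al < a" "a < 1" "1 < b"
    and d1: "(ratfun P Q has_real_derivative 0) (at bt)"
    and d2: "(ratfun P Q has_real_derivative 0) (at al)"
    and d3: "(ratfun P Q has_real_derivative 0) (at a)"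
    and d4: "(ratfun P Q has_real_derivative 0) (at b)"
    and v: "ratfun P Q bt = - mu" "ratfun P Q b = lam" "- ratfun P Q al = 1" "ratfun P Q a = 1"
    unfolding isGtilde_def by blast
  define p0 where "p0 = coeff P 0"
  define p1 where "p1 = coeff P 1"
  define p2 where "p2 = coeff P 2"
  define p3 where "p3 = coeff P 3"
  define q0 where "q0 = coeff Q 0"
  define q1 where "q1 = coeff Q 1"
  define q2 where "q2 = coeff Q 2"
  have PP: "\<And>z. poly P z = p0 + p1*z + p2*z^2 + p3*z^3" using poly3[OF dP] by (simp add: p0_def p1_def p2_def p3_def)
  have QQ: "\<And>z. poly Q z = q0 + q1*z + q2*z^2" using poly2[OF dQ] by (simp add: q0_def q1_def q2_def)
  have "P \<noteq> 0" using dP by auto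
  hence p3: "p3 \<noteq> 0" using leading_coeff_neq_0[of P] dP by (simp add: p3_def)
  have "Q \<noteq> 0" using dQ by auto
  hence q2: "q2 \<noteq> 0" using leading_coeff_neq_0[of Q] dQ by (simp add: q2_def)
  have "poly Q 1 = 0" by (rule pole_zero[OF pp])
  hence Q1: "q0 + q1 + q2 = 0" using QQ[of 1] by simp
  have "poly Q (-1) = 0" by (rule pole_zero[OF pm])
  hence Q2: "q0 - q1 + q2 = 0" using QQ[of "-1"] by simp
  have QQ': "\<And>z. poly Q z = q2*(z^2 - 1)"
  proof -
    fix z
    have "q1 = 0" "q0 = - q2" using Q1 Q2 by linarith+
    thus "poly Q z = q2*(z^2 - 1)" using QQ[of z] by (simp add: algebra_simps)
  qed
  have fdef: "ratfun P Q = (\<lambda>z. (p0+p1*z+p2*z^2+p3*z^3)/(q2*(z^2-1)))"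
    unfolding ratfun_def PP QQ' by simp
  have sq: "bt^2 \<noteq> 1" "al^2 \<noteq> 1" "a^2 \<noteq> 1" "b^2 \<noteq> 1"
    using ord by (auto simp: power2_eq_1_iff)
  have k1: "p3*bt^4 - (p1+3*p3)*bt^2 - 2*(p0+p2)*bt - p1 = 0"
    using quartic_of_deriv[OF q2 sq(1)] d1 unfolding fdef by blast
  have k2: "p3*al^4 - (p1+3*p3)*al^2 - 2*(p0+p2)*al - p1 = 0"
    using quartic_of_deriv[OF q2 sq(2)] d2 unfolding fdef by blast
  have k3: "p3*a^4 - (p1+3*p3)*a^2 - 2*(p0+p2)*a - p1 = 0"
    using quartic_of_deriv[OF q2 sq(3)] d3 unfolding fdef by blast
  have k4: "p3*b^4 - (p1+3*p3)*b^2 - 2*(p0+p2)*b - p1 = 0"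
    using quartic_of_deriv[OF q2 sq(4)] d4 unfolding fdef by blast
  define c2 where "c2 = -(p1+3*p3)/p3"
  define c1 where "c1 = -2*(p0+p2)/p3"
  define c0 where "c0 = -p1/p3"
  have kk: "\<And>r. p3*r^4 - (p1+3*p3)*r^2 - 2*(p0+p2)*r - p1 = 0 \<Longrightarrow> r^4 + 0*r^3 + c2*r^2 + c1*r + c0 = 0"
  proof -
    fix r assume h: "p3*r^4 - (p1+3*p3)*r^2 - 2*(p0+p2)*r - p1 = 0"
    have "p3 * (r^4 + 0*r^3 + c2*r^2 + c1*r + c0) = p3*r^4 - (p1+3*p3)*r^2 - 2*(p0+p2)*r - p1"
      unfolding c2_def c1_def c0_def using p3 by (simp add: field_simps)
    thus "r^4 + 0*r^3 + c2*r^2 + c1*r + c0 = 0" using h p3 by simp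
  qed
  have neq: "bt \<noteq> al" "bt \<noteq> a" "bt \<noteq> b" "al \<noteq> a" "al \<noteq> b" "a \<noteq> b" using ord by auto
  note V = vieta4[OF neq kk[OF k1] kk[OF k2] kk[OF k3] kk[OF k4]]
  have sum: "bt + al + a + b = 0" using V(1) by simp
  have e2: "p3*(bt*al + bt*a + bt*b + al*a + al*b + a*b) = -(p1+3*p3)" using V(2) p3 unfolding c2_def by (simp add: field_simps)
  have e3: "p3*(bt*al*a + bt*al*b + bt*a*b + al*a*b) = 2*(p0+p2)" using V(3) p3 unfolding c1_def by (simp add: field_simps)
  have e4: "p3*(bt*al*a*b) = -p1" using V(4) p3 unfolding c0_def by (simp add: field_simps)
  have btd: "bt = -(al + a + b)" using sum by simp
  have "p3 * ((1 - al*a)*(b^2 + (a+al)*b - 3) + (a - al)^2) = 0"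
  proof -
    have "p3 * ((1 - al*a)*(b^2 + (a+al)*b - 3) + (a - al)^2) =
      p3*(bt*al*a*b) - p3*(bt*al + bt*a + bt*b + al*a + al*b + a*b) - 3*p3"
      unfolding btd by algebra
    also have "\<dots> = 0" unfolding e2 e4 by simp
    finally show ?thesis .
  qed
  hence con: "(1 - al*a)*(b^2 + (a+al)*b - 3) + (a - al)^2 = 0" using p3 by simp
  define A where "A = coefA bt al a b"
  define B where "B = coefB bt al a b"
  have A4: "4*A = (1-bt)*(1-al)*(1-a)*(1-b)" unfolding A_def coefA_def by simp
  have B4: "4*B = (1+bt)*(1+al)*(1+a)*(1+b)" unfolding B_def coefB_def by simp
  have pA: "p3*(4*A) = -2*p3 - 2*p1 - 2*p0 - 2*p2"
  proof -
    have "p3*(4*A) = p3 - p3*(bt+al+a+b) + p3*(bt*al + bt*a + bt*b + al*a + al*b + a*b)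
       - p3*(bt*al*a + bt*al*b + bt*a*b + al*a*b) + p3*(bt*al*a*b)" unfolding A4 by algebra
    also have "\<dots> = -2*p3 - 2*p1 - 2*p0 - 2*p2" unfolding e2 e3 e4 sum by simp
    finally show ?thesis .
  qed
  have pB: "p3*(4*B) = -2*p3 - 2*p1 + 2*p0 + 2*p2"
  proof -
    have "p3*(4*B) = p3 + p3*(bt+al+a+b) + p3*(bt*al + bt*a + bt*b + al*a + al*b + a*b)
       + p3*(bt*al*a + bt*al*b + bt*a*b + al*a*b) + p3*(bt*al*a*b)" unfolding B4 by algebra
    also have "\<dots> = -2*p3 - 2*p1 + 2*p0 + 2*p2" unfolding e2 e3 e4 sum by simp
    finally show ?thesis .
  qed
  have r1: "p1 = -p3*(1 + A + B)" using pA pB by algebra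
  have r0: "p0 = -p2 - p3*(A - B)" using pA pB by algebra
  define cf where "cf = p3/q2"
  define e where "e = p2/p3"
  have rep: "\<And>z. z \<noteq> 1 \<Longrightarrow> z \<noteq> -1 \<Longrightarrow>
       ratfun P Q z = cf * (e + z + A / (1 - z) - B / (1 + z))"
  proof -
    fix z :: real assume z: "z \<noteq> 1" "z \<noteq> -1"
    have z': "1 - z \<noteq> 0" "1 + z \<noteq> 0" "z^2 - 1 \<noteq> 0" using z by (auto simp: power2_eq_1_iff)
    have cq: "cf * q2 = p3" unfolding cf_def using q2 by simp
    have h1: "(z^2-1)/(1-z) = -(1+z)" using z' by (simp add: field_simps power2_eq_square)
    have h2: "(z^2-1)/(1+z) = z-1" using z' by (simp add: field_simps power2_eq_square)
    have "cf * (e + z + A / (1 - z) - B / (1 + z)) * (q2 * (z^2-1)) =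
       (cf*q2)*((e+z)*(z^2-1) + A*((z^2-1)/(1-z)) - B*((z^2-1)/(1+z)))" unfolding divide_inverse by algebra
    also have "\<dots> = p3*((e+z)*(z^2-1) - A*(1+z) - B*(z-1))" unfolding h1 h2 cq by (simp add: algebra_simps)
    also have "\<dots> = (p3*e)*(z^2-1) + p3*z*(z^2-1) - p3*A*(1+z) - p3*B*(z-1)" by algebra
    also have "p3*e = p2" unfolding e_def using p3 by simp
    also have "p2*(z^2-1) + p3*z*(z^2-1) - p3*A*(1+z) - p3*B*(z-1) = p0+p1*z+p2*z^2+p3*z^3"
      unfolding r1 r0 by algebra
    finally have "cf * (e + z + A / (1 - z) - B / (1 + z)) = (p0+p1*z+p2*z^2+p3*z^3) / (q2 * (z^2-1))"
      using z' q2 by (simp add: eq_divide_eq)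
    thus "ratfun P Q z = cf * (e + z + A / (1 - z) - B / (1 + z))" unfolding fdef by simp
  qed
  have lim: "((\<lambda>z. ratfun P Q z / z) \<longlongrightarrow> cf) at_top"
  proof -
    have i0: "((\<lambda>z::real. inverse z) \<longlongrightarrow> 0) at_top" by (rule tendsto_inverse_0_at_top[OF filterlim_ident])
    have "((\<lambda>z. (p3 + p2 * inverse z + p1 * (inverse z)^2 + p0 * (inverse z)^3) / (q2 * (1 - (inverse z)^2)))
       \<longlongrightarrow> (p3 + p2 * 0 + p1 * 0^2 + p0 * 0^3) / (q2 * (1 - 0^2))) at_top"
      using q2 by (intro tendsto_intros i0) auto
    hence l1: "((\<lambda>z. (p3 + p2 * inverse z + p1 * (inverse z)^2 + p0 * (inverse z)^3) / (q2 * (1 - (inverse z)^2)))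
       \<longlongrightarrow> cf) at_top" by (simp add: cf_def)
    have "eventually (\<lambda>z. (p3 + p2 * inverse z + p1 * (inverse z)^2 + p0 * (inverse z)^3) / (q2 * (1 - (inverse z)^2))
       = ratfun P Q z / z) at_top"
      using eventually_gt_at_top[of 1]
    proof eventually_elim
      case (elim z)
      have z0: "z \<noteq> 0" using elim by simp
      have zz: "z^2 - 1 \<noteq> 0" using elim by (simp add: power2_eq_1_iff)
      have "(p3 + p2 * inverse z + p1 * (inverse z)^2 + p0 * (inverse z)^3) = (p0+p1*z+p2*z^2+p3*z^3) / z^3"
        using z0 by (simp add: field_simps power_inverse eval_nat_numeral)
      moreover have "1 - (inverse z)^2 = (z^2-1)/z^2" using z0 by (simp add: field_simps power_inverse)
      ultimately show ?case unfolding fdef using z0 zz q2 by (simp add: field_simps eval_nat_numeral)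
    qed
    from tendsto_cong[OF this] l1 show ?thesis by simp
  qed
  show ?thesis
    apply (rule that[of bt al a b cf e])
    using ord sum con rep v lim unfolding A_def B_def by auto
qed


lemma one_minus_pos: fixes al a :: real assumes "-1 < al" "al < a" "a < 1" shows "0 < 1 - a*al"
proof -
  have "0 < (1-al)*(1+a)" using assms by (intro mult_pos_pos) auto
  moreover have "0 < (1+al)*(1-a)" using assms by (intro mult_pos_pos) auto
  ultimately have "0 < (1-al)*(1+a) + (1+al)*(1-a)" by linarith
  moreover have "(1-al)*(1+a) + (1+al)*(1-a) = 2 - 2*(a*al)" by algebra
  ultimately show ?thesis by linarith
qed

lemma quad_roots_ex:
  assumes "-1 < al" "al < a" "a < 1"
  shows "\<exists>\<beta> b. \<beta> < -1 \<and> 1 < b \<and> quad al a \<beta> = 0 \<and> quad al a b = 0"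
proof -
  have p: "0 < 1 - a*al" using one_minus_pos assms by blast
  define s where "s = a + al"
  define q where "q = (a - al)^2/(1 - a*al) - 3"
  have qd: "\<And>x. quad al a x = x^2 + s*x + q" unfolding quad_def s_def q_def by simp
  have "(1 - a*al) * quad al a 1 = - ((1-al)*(1-a)*(2+s))"
    unfolding quad_def s_def using p by (simp add: field_simps) algebra
  moreover have "0 < (1-al)*(1-a)*(2+s)" using assms unfolding s_def by (intro mult_pos_pos) auto
  ultimately have "(1 - a*al) * quad al a 1 < 0" by linarith
  hence q1: "quad al a 1 < 0" using p by (simp add: mult_less_0_iff)
  have "(1 - a*al) * quad al a (-1) = - ((1+al)*(1+a)*(2-s))"
    unfolding quad_def s_def using p by (simp add: field_simps) algebra
  moreover have "0 < (1+al)*(1+a)*(2-s)" using assms unfolding s_def by (intro mult_pos_pos) auto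
  ultimately have "(1 - a*al) * quad al a (-1) < 0" by linarith
  hence q2: "quad al a (-1) < 0" using p by (simp add: mult_less_0_iff)
  define D where "D = s^2 - 4*q"
  have qD: "\<And>x. quad al a x = (x + s/2)^2 - D/4" unfolding qd D_def by (simp add: field_simps power2_eq_square)
  have D1: "(1 + s/2)^2 < D/4" using q1 qD[of 1] by simp
  have D2: "(-1 + s/2)^2 < D/4" using q2 qD[of "-1"] by simp
  have "0 \<le> (1 + s/2)^2" by simp
  hence Dp: "0 \<le> D" using D1 by linarith
  have sD: "sqrt D ^2 = D" using Dp by simp
  have "(1 + s/2)^2 < (sqrt D / 2)^2" using D1 sD by (simp add: power_divide)
  hence "\<bar>1 + s/2\<bar>^2 < (sqrt D / 2)^2" using Dp by simp
  hence a1: "\<bar>1 + s/2\<bar> < sqrt D / 2" by (rule power2_less_imp_less) (simp add: Dp)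
  have "(-1 + s/2)^2 < (sqrt D / 2)^2" using D2 sD by (simp add: power_divide)
  hence "\<bar>-1 + s/2\<bar>^2 < (sqrt D / 2)^2" using Dp by simp
  hence a2: "\<bar>-1 + s/2\<bar> < sqrt D / 2" by (rule power2_less_imp_less) (simp add: Dp)
  define r1 where "r1 = - s/2 - sqrt D/2"
  define r2 where "r2 = - s/2 + sqrt D/2"
  have "-1 + s/2 > - (sqrt D / 2)" using a2 by linarith
  hence "r1 < -1" unfolding r1_def by linarith
  moreover have "1 + s/2 < sqrt D / 2" using a1 by linarith
  hence "1 < r2" unfolding r2_def by linarith
  moreover have "quad al a r1 = 0" unfolding qD r1_def using sD by (simp add: field_simps power2_eq_square)
  moreover have "quad al a r2 = 0" unfolding qD r2_def using sD by (simp add: field_simps power2_eq_square)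
  ultimately show ?thesis by blast
qed

lemma quad_two:
  assumes "quad al a t = 0" "quad al a u = 0" "quad al a v = 0" "u \<noteq> v"
  shows "t = u \<or> t = v"
proof -
  have "(t - u) * (t + u + (a + al)) = 0" using assms(1,2) unfolding quad_def by algebra
  moreover have "(v - u) * (v + u + (a + al)) = 0" using assms(3,2) unfolding quad_def by algebra
  ultimately show ?thesis using assms(4) by auto
qed

theorem lemma4p3:
  fixes lam mu :: real
  assumes "lam > 1" and "mu > 1"
  shows "(\<exists>\<alpha> a. -1 < \<alpha> \<and> \<alpha> < a \<and> a < 1 \<and> sys lam mu \<alpha> a) \<and>
    (\<forall>\<alpha> a. -1 < \<alpha> \<and> \<alpha> < a \<and> a < 1 \<and> sys lam mu \<alpha> a \<longrightarrow>
       (\<exists>\<beta> b. \<beta> < -1 \<and> 1 < b \<and> quad \<alpha> a \<beta> = 0 \<and> quad \<alpha> a b = 0) \<and>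
       (\<forall>\<beta> b. \<beta> < -1 \<and> 1 < b \<and> quad \<alpha> a \<beta> = 0 \<and> quad \<alpha> a b = 0 \<longrightarrow>
          (\<forall>P Q. isGtilde lam mu P Q \<longrightarrow>
             (\<forall>z. z \<noteq> 1 \<and> z \<noteq> -1 \<longrightarrow> Gfun \<beta> \<alpha> a b z = ratfun P Q z) \<and>
             (\<forall>c>0. ((\<lambda>z. c * ratfun P Q z / z) \<longlongrightarrow> 1) at_top \<longrightarrow>
                (\<forall>z. z \<noteq> 1 \<and> z \<noteq> -1 \<longrightarrow> Hfun \<beta> \<alpha> a b z = c * ratfun P Q z)))))"
proof (rule conjI)
  obtain x y where xy: "-1 < x" "x < y" "y < 1" "Lf x y = lam" "Mf x y = mu"
    using exists_LM[OF assms] by blast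
  show "\<exists>\<alpha> a. -1 < \<alpha> \<and> \<alpha> < a \<and> a < 1 \<and> sys lam mu \<alpha> a"
    using xy sys_iff[of x y lam mu] assms by blast
next
  show "\<forall>\<alpha> a. -1 < \<alpha> \<and> \<alpha> < a \<and> a < 1 \<and> sys lam mu \<alpha> a \<longrightarrow>
       (\<exists>\<beta> b. \<beta> < -1 \<and> 1 < b \<and> quad \<alpha> a \<beta> = 0 \<and> quad \<alpha> a b = 0) \<and>
       (\<forall>\<beta> b. \<beta> < -1 \<and> 1 < b \<and> quad \<alpha> a \<beta> = 0 \<and> quad \<alpha> a b = 0 \<longrightarrow>
          (\<forall>P Q. isGtilde lam mu P Q \<longrightarrow>
             (\<forall>z. z \<noteq> 1 \<and> z \<noteq> -1 \<longrightarrow> Gfun \<beta> \<alpha> a b z = ratfun P Q z) \<and>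
             (\<forall>c>0. ((\<lambda>z. c * ratfun P Q z / z) \<longlongrightarrow> 1) at_top \<longrightarrow>
                (\<forall>z. z \<noteq> 1 \<and> z \<noteq> -1 \<longrightarrow> Hfun \<beta> \<alpha> a b z = c * ratfun P Q z))))"
  proof (intro allI impI)
  fix al a :: real
  assume H: "-1 < al \<and> al < a \<and> a < 1 \<and> sys lam mu al a"
  hence H': "-1 < al" "al < a" "a < 1" "sys lam mu al a" by auto
  have LM: "Lf al a = lam" "Mf al a = mu" using sys_iff[of al a lam mu] H' assms by auto
  show "(\<exists>\<beta> b. \<beta> < -1 \<and> 1 < b \<and> quad al a \<beta> = 0 \<and> quad al a b = 0) \<and>
       (\<forall>\<beta> b. \<beta> < -1 \<and> 1 < b \<and> quad al a \<beta> = 0 \<and> quad al a b = 0 \<longrightarrow>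
          (\<forall>P Q. isGtilde lam mu P Q \<longrightarrow>
             (\<forall>z. z \<noteq> 1 \<and> z \<noteq> -1 \<longrightarrow> Gfun \<beta> al a b z = ratfun P Q z) \<and>
             (\<forall>c>0. ((\<lambda>z. c * ratfun P Q z / z) \<longlongrightarrow> 1) at_top \<longrightarrow>
                (\<forall>z. z \<noteq> 1 \<and> z \<noteq> -1 \<longrightarrow> Hfun \<beta> al a b z = c * ratfun P Q z))))"
  proof (rule conjI)
  show "\<exists>\<beta> b. \<beta> < -1 \<and> 1 < b \<and> quad al a \<beta> = 0 \<and> quad al a b = 0"
    using quad_roots_ex[OF H'(1-3)] .
  next
  show "\<forall>\<beta> b. \<beta> < -1 \<and> 1 < b \<and> quad al a \<beta> = 0 \<and> quad al a b = 0 \<longrightarrow>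
          (\<forall>P Q. isGtilde lam mu P Q \<longrightarrow>
             (\<forall>z. z \<noteq> 1 \<and> z \<noteq> -1 \<longrightarrow> Gfun \<beta> al a b z = ratfun P Q z) \<and>
             (\<forall>c>0. ((\<lambda>z. c * ratfun P Q z / z) \<longlongrightarrow> 1) at_top \<longrightarrow>
                (\<forall>z. z \<noteq> 1 \<and> z \<noteq> -1 \<longrightarrow> Hfun \<beta> al a b z = c * ratfun P Q z)))"
  proof (intro allI impI)
  fix \<beta> b :: real
  assume Hb: "\<beta> < -1 \<and> 1 < b \<and> quad al a \<beta> = 0 \<and> quad al a b = 0"
  fix P Q assume G: "isGtilde lam mu P Q"
  define PR where "PR = (\<lambda>bt al a b cf e. bt < -1 \<and> -1 < al \<and> al < a \<and> a < 1 \<and> 1 < b \<and>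
    bt + al + a + b = 0 \<and> (1 - al*a)*(b^2 + (a+al)*b - 3) + (a - al)^2 = 0 \<and>
    (\<forall>z. z \<noteq> 1 \<and> z \<noteq> -1 \<longrightarrow>
       ratfun P Q z = cf * (e + z + coefA bt al a b / (1 - z) - coefB bt al a b / (1 + z))) \<and>
    ratfun P Q bt = - mu \<and> ratfun P Q al = -1 \<and> ratfun P Q a = 1 \<and> ratfun P Q b = lam \<and>
    ((\<lambda>z. ratfun P Q z / z) \<longlongrightarrow> cf) at_top)"
  have "\<exists>bt al a b cf e. PR bt al a b cf e"
  proof (rule Gt_rep[OF G])
    fix bt al a b cf e
    assume h: "bt < -1" "-1 < al" "al < a" "a < 1" "1 < b" "bt + al + a + b = 0"
      "(1 - al*a)*(b^2 + (a+al)*b - 3) + (a - al)^2 = 0"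
      and r: "\<And>z. z \<noteq> 1 \<Longrightarrow> z \<noteq> -1 \<Longrightarrow>
       ratfun P Q z = cf * (e + z + coefA bt al a b / (1 - z) - coefB bt al a b / (1 + z))"
      and vv: "ratfun P Q bt = - mu" "ratfun P Q al = -1" "ratfun P Q a = 1" "ratfun P Q b = lam"
      and l: "((\<lambda>z. ratfun P Q z / z) \<longlongrightarrow> cf) at_top"
    have "PR bt al a b cf e" unfolding PR_def using h r vv l by simp
    thus "\<exists>bt al a b cf e. PR bt al a b cf e" by blast
  qed
  then obtain bt al' a' b' cf e where X: "PR bt al' a' b' cf e" by blast
  have ord: "bt < -1" "-1 < al'" "al' < a'" "a' < 1" "1 < b'"
    and sum: "bt + al' + a' + b' = 0" and con: "(1 - al'*a')*(b'^2 + (a'+al')*b' - 3) + (a' - al')^2 = 0"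
    and rep: "\<And>z. z \<noteq> 1 \<Longrightarrow> z \<noteq> -1 \<Longrightarrow>
       ratfun P Q z = cf * (e + z + coefA bt al' a' b' / (1 - z) - coefB bt al' a' b' / (1 + z))"
    and v: "ratfun P Q bt = - mu" "ratfun P Q al' = -1" "ratfun P Q a' = 1" "ratfun P Q b' = lam"
    and lim: "((\<lambda>z. ratfun P Q z / z) \<longlongrightarrow> cf) at_top"
    using X unfolding PR_def by auto
  note GS = Gt_sys[OF ord sum con rep v]
  have "Lf al' a' = lam" "Mf al' a' = mu" using sys_iff[of al' a' lam mu] GS(1) ord assms by auto
  hence eq: "al' = al \<and> a' = a" using uniq_LM[of al' a' al a] ord H' LM by auto
  have p: "0 < 1 - a*al" using one_minus_pos H' by blast
  have qb': "quad al a b' = 0"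
  proof -
    have "(1 - a*al)*(b'^2 + (a+al)*b' - 3) + (a - al)^2 = 0" using con eq by (simp add: mult.commute)
    hence "b'^2 + (a+al)*b' - 3 + (a - al)^2/(1 - a*al) = 0" using p by (simp add: field_simps)
    thus ?thesis unfolding quad_def by simp
  qed
  have qbt: "quad al a bt = 0"
  proof -
    have btd: "bt = -(al + a + b')" using sum eq by auto
    have "bt^2 + (a+al)*bt = b'^2 + (a+al)*b'" unfolding btd by algebra
    hence "quad al a bt = quad al a b'" unfolding quad_def by simp
    thus ?thesis using qb' by simp
  qed
  have bne: "\<beta> \<noteq> b" using Hb by auto
  have "bt = \<beta> \<or> bt = b" using quad_two[OF qbt _ _ bne] Hb by blast
  hence btb: "bt = \<beta>" using ord Hb by auto
  have "b' = \<beta> \<or> b' = b" using quad_two[OF qb' _ _ bne] Hb by blast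
  hence bb: "b' = b" using ord Hb by auto
  have Hf: "\<And>z. z \<noteq> 1 \<Longrightarrow> z \<noteq> -1 \<Longrightarrow> Hfun \<beta> al a b z = ratfun P Q z / cf"
    using GS(3) eq btb bb by auto
  have cf: "cf \<noteq> 0" by (rule GS(2))
  have Ha: "Hfun \<beta> al a b a = 1 / cf" using Hf[of a] H' v(3) eq by auto
  show "(\<forall>z. z \<noteq> 1 \<and> z \<noteq> -1 \<longrightarrow> Gfun \<beta> al a b z = ratfun P Q z) \<and>
             (\<forall>c>0. ((\<lambda>z. c * ratfun P Q z / z) \<longlongrightarrow> 1) at_top \<longrightarrow>
                (\<forall>z. z \<noteq> 1 \<and> z \<noteq> -1 \<longrightarrow> Hfun \<beta> al a b z = c * ratfun P Q z))"
  proof (rule conjI)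
  show "\<forall>z. z \<noteq> 1 \<and> z \<noteq> -1 \<longrightarrow> Gfun \<beta> al a b z = ratfun P Q z"
    unfolding Gfun_def using Hf Ha cf by auto
  next
  show "\<forall>c>0. ((\<lambda>z. c * ratfun P Q z / z) \<longlongrightarrow> 1) at_top \<longrightarrow>
                (\<forall>z. z \<noteq> 1 \<and> z \<noteq> -1 \<longrightarrow> Hfun \<beta> al a b z = c * ratfun P Q z)"
  proof (intro allI impI)
  fix c :: real assume c: "0 < c"
  assume cl: "((\<lambda>z. c * ratfun P Q z / z) \<longlongrightarrow> 1) at_top"
  have "((\<lambda>z. c * (ratfun P Q z / z)) \<longlongrightarrow> c * cf) at_top" by (intro tendsto_intros lim)
  moreover have "((\<lambda>z. c * (ratfun P Q z / z)) \<longlongrightarrow> 1) at_top" using cl by simp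
  ultimately have "c * cf = 1" using tendsto_unique by force
  hence "1 / cf = c" using cf by (simp add: field_simps)
  fix z :: real assume "z \<noteq> 1 \<and> z \<noteq> -1"
  hence "Hfun \<beta> al a b z = ratfun P Q z / cf" using Hf by auto
  also have "\<dots> = (1 / cf) * ratfun P Q z" by simp
  finally show "Hfun \<beta> al a b z = c * ratfun P Q z" using \<open>1 / cf = c\<close> by simp
  qed
  qed
  qed
  qed
  qed
qed

end
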